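(* Let $n\ge 2$ be an integer and let $c,\Delta x,\alpha,q_1,q_2,r,\sigma_m,\sigma_d>0$. Define $$\Pi_1=\frac{\alpha^2}{\Delta x^2},\quad \Pi_2=\frac{c^2q_1^2}{q_2^2\Delta x^2},\quad \Pi_3=\frac{\Delta x^2 r}{c^2q_1},\quad \Pi_4=\frac{\Delta x^2\sigma_d}{c^2\sigma_m}.$$ Let $\mathbb{D}^2$ be the $n\times n$ circulant matrix with first row $(-2,1,0,\ldots,0,1)$, $A=\begin{bmatrix}0&I\\ \mathbb{D}^2&0\end{bmatrix}$, $B=\begin{bmatrix}0\\ I\end{bmatrix}$, $C=\begin{bmatrix}\Pi_4 I&0\end{bmatrix}$. Let $K=\begin{bmatrix}K_1&K_2\end{bmatrix}$ ($K_1,K_2\in\mathbb{R}^{n\times n}$) be the optimal LQR gain for the problem of minimizing $\int_0^\infty \boldsymbol{\Phi}^T\begin{bmatrix}I-\Pi_1\mathbb{D}^2&0\\0&\Pi_2I\end{bmatrix}\boldsymbol{\Phi}+\Pi_3^{-2}\boldsymbol{\omega}^T\boldsymbol{\omega}\,d\tau$ subject to $\frac{d}{d\tau}\boldsymbol{\Phi}=A\boldsymbol{\Phi}+B\boldsymbol{\omega}$, and let $L=\begin{bmatrix}L_1\\ L_2\end{bmatrix}$ ($L_1,L_2\in\mathbb{R}^{n\times n}$) be the optimal Kalman filter gain for the system $\frac{d}{d\tau}\boldsymbol{\Psi}=A\boldsymbol{\Psi}+B\boldsymbol{\rho}$, $\boldsymbol{\gamma}=C\boldsymbol{\Psi}+\boldsymbol{\eta}$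 with cost $\int_0^\infty\boldsymbol{\eta}^T(I-\Pi_1\mathbb{D}^2)\boldsymbol{\eta}+\boldsymbol{\rho}^T\boldsymbol{\rho}\,d\tau$. The corresponding (nondimensional, discretized) LQG controller is $\frac{d}{d\tau}\tilde{\boldsymbol{\Phi}}=(A-LC)\tilde{\boldsymbol{\Phi}}+B\boldsymbol{\omega}+L\boldsymbol{\gamma}$, $\boldsymbol{\omega}=-K\tilde{\boldsymbol{\Phi}}$. If $q_1=\sigma_m$, $r=\sigma_d$, and $\Pi_1=\frac{2}{\Pi_4}$, then this LQG controller is completely decentralized, i.e. $K_1,K_2,L_1,L_2$ are all diagonal matrices.
   Context: This is the spatial discretization (with $n$ equispaced points, spacing $\Delta x$, periodic boundary conditions) and nondimensionalization of the LQG problem for the wave equation $\partial_t^2p=c^2\partial_x^2p+u+d$, $y=p+m$ on a circle, with LQR cost weights $1/q_1^2$ (on $p$ in a Sobolev-type norm with parameter $\alpha$), $1/q_2^2$ (on $\partial_tp$), $1/r^2$ (on $u$), and Kalman filter cost weights $1/\sigma_m^2$ (on $m$, Sobolev-type norm with parameter $\alpha$), $1/\sigma_d^2$ (on $d$). The optimal LQR gain for cost $\int\boldsymbol{\Phi}^TQ\boldsymbol{\Phi}+\boldsymbol{\omega}^TR\boldsymbol{\omega}$ is $K=R^{-1}B^TP$ with $P$ the symmetric positive definite stabilizing solution of $PA+A^TP-PBR^{-1}B^TP+Q=0$; the optimal Kalman gain for cost $\int\boldsymbol{\eta}^TW\boldsymbol{\eta}+\boldsymbol{\rho}^T\boldsymbol{\rho}$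 is $L=SC^TW$ with $S$ the symmetric positive definite stabilizing solution of $AS+SA^T+BB^T-SC^TWCS=0$. Gains are called completely decentralized when their $n\times n$ blocks are diagonal (so computation at spatial location $i$ needs only data at location $i$). *)

theory Defs
  imports Complex_Main "Jordan_Normal_Form.Matrix" "Jordan_Normal_Form.Char_Poly"
begin

text \<open>Periodic second-difference matrix: n x n circulant with first row
  (-2, 1, 0, ..., 0, 1); entries written additively so that it is the
  periodic discrete Laplacian x(i+1) - 2 x(i) + x(i-1).\<close>
definition D2 :: "nat \<Rightarrow> real mat" where
  "D2 n = mat n n (\<lambda>(i,j). (if i = j then -2 else 0)
            + (if j = (i + 1) mod n then 1 else 0)
            + (if i = (j + 1) mod n then 1 else 0))"

definition sys_A :: "nat \<Rightarrow> real mat" where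
  "sys_A n = four_block_mat (0\<^sub>m n n) (1\<^sub>m n) (D2 n) (0\<^sub>m n n)"

definition sys_B :: "nat \<Rightarrow> real mat" where
  "sys_B n = four_block_mat (0\<^sub>m n n) (0\<^sub>m n 0) (1\<^sub>m n) (0\<^sub>m n 0)"

definition sys_C :: "nat \<Rightarrow> real \<Rightarrow> real mat" where
  "sys_C n p4 = four_block_mat (p4 \<cdot>\<^sub>m 1\<^sub>m n) (0\<^sub>m n n) (0\<^sub>m 0 n) (0\<^sub>m 0 n)"

definition spd :: "nat \<Rightarrow> real mat \<Rightarrow> bool" where
  "spd m P \<longleftrightarrow> P \<in> carrier_mat m m \<and> P\<^sup>T = P \<and>
     (\<forall>v \<in> carrier_vec m. v \<noteq> 0\<^sub>v m \<longrightarrow> v \<bullet> (P *\<^sub>v v) > 0)"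

definition hurwitz :: "real mat \<Rightarrow> bool" where
  "hurwitz M \<longleftrightarrow> (\<forall>z. eigenvalue (map_mat complex_of_real M) z \<longrightarrow> Re z < 0)"

text \<open>K is the optimal LQR gain: K = R^-1 B^T P (R^-1 given as Rinv), P SPD stabilizing solution of the CARE.\<close>
definition optimal_LQR_gain :: "nat \<Rightarrow> real mat \<Rightarrow> real mat \<Rightarrow> real mat \<Rightarrow> real mat \<Rightarrow> real mat \<Rightarrow> bool" where
  "optimal_LQR_gain m A B Q Rinv K \<longleftrightarrow> (\<exists>P. spd m P \<and>
     P * A + A\<^sup>T * P - P * B * Rinv * B\<^sup>T * P + Q = 0\<^sub>m m m \<and>
     hurwitz (A - B * Rinv * B\<^sup>T * P) \<and>
     K = Rinv * B\<^sup>T * P)"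

definition optimal_Kalman_gain :: "nat \<Rightarrow> real mat \<Rightarrow> real mat \<Rightarrow> real mat \<Rightarrow> real mat \<Rightarrow> real mat \<Rightarrow> bool" where
  "optimal_Kalman_gain m A B C W L \<longleftrightarrow> (\<exists>S. spd m S \<and>
     A * S + S * A\<^sup>T + B * B\<^sup>T - S * C\<^sup>T * W * C * S = 0\<^sub>m m m \<and>
     hurwitz (A - S * C\<^sup>T * W * C) \<and>
     L = S * C\<^sup>T * W)"

end

theory Submission
  imports Defs
begin


lemma lin3: fixes A B C Dq F E X p R m :: complex
  shows "A + B - C + Dq = 0 \<Longrightarrow> A - F = m*X + R \<Longrightarrow> Dq + E + m*p + R = 0 \<Longrightarrow> B - C - (E - F) = -m*(X - p)"
proof -
  assume h1: "A + B - C + Dq = 0" and h2: "A - F = m*X + R" and h3: "Dq + E + m*p + R = 0"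
  have e1: "B - C = -A - Dq" using h1 by (simp add: algebra_simps eq_neg_iff_add_eq_0) 
  have e2: "F = A - m*X - R" using h2 by (simp add: algebra_simps)
  have e3: "E = - Dq - m*p - R" using h3 by (simp add: algebra_simps eq_neg_iff_add_eq_0)
  have "B - C - (E - F) = (-A - Dq) - ((- Dq - m*p - R) - (A - m*X - R))"
    by (subst e1[symmetric], subst e2, subst e3, simp)
  also have "\<dots> = -m*(X - p)" by (simp add: algebra_simps)
  finally show ?thesis .
qed

lemma core_step:
  fixes P H :: "complex mat" and fA fAT fQ fg :: "complex vec \<Rightarrow> complex vec"
  assumes P: "P \<in> carrier_mat m m" and H: "H \<in> carrier_mat m m"
    and dims: "\<And>v. v \<in> carrier_vec m \<Longrightarrow> fA v \<in> carrier_vec m"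
      "\<And>v. v \<in> carrier_vec m \<Longrightarrow> fAT v \<in> carrier_vec m"
      "\<And>v. v \<in> carrier_vec m \<Longrightarrow> fQ v \<in> carrier_vec m"
      "\<And>v. v \<in> carrier_vec m \<Longrightarrow> fg v \<in> carrier_vec m"
    and care: "\<And>v. v \<in> carrier_vec m \<Longrightarrow> P *\<^sub>v fA v + fAT (P *\<^sub>v v) - P *\<^sub>v fg (P *\<^sub>v v) + fQ v = 0\<^sub>v m"
    and Hdef: "\<And>v. v \<in> carrier_vec m \<Longrightarrow> H *\<^sub>v v = fAT v - P *\<^sub>v fg v"
    and hur: "\<And>z. eigenvalue H z \<Longrightarrow> Re z < 0"
    and w: "w \<in> carrier_vec m" and p: "p \<in> carrier_vec m" and r: "r \<in> carrier_vec m"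
    and e1: "fA w - fg p = \<mu> \<cdot>\<^sub>v w + r"
    and e2: "fQ w + fAT p + \<mu> \<cdot>\<^sub>v p + r' = 0\<^sub>v m"
    and rr: "P *\<^sub>v r = r'"
    and mu: "Re \<mu> < 0"
  shows "P *\<^sub>v w = p"
proof -
  have r': "r' \<in> carrier_vec m" using rr P r by auto
  define z where "z = P *\<^sub>v w - p"
  have z: "z \<in> carrier_vec m" unfolding z_def using P w p by auto
  have Pw: "P *\<^sub>v w \<in> carrier_vec m" using P w by auto
  have c1: "P *\<^sub>v fA w + fAT (P *\<^sub>v w) - P *\<^sub>v fg (P *\<^sub>v w) + fQ w = 0\<^sub>v m" using care w by auto
  have h1: "H *\<^sub>v z = H *\<^sub>v (P *\<^sub>v w) - H *\<^sub>v p" unfolding z_def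
    using H Pw p by (simp add: mult_minus_distrib_mat_vec)
  have h2: "H *\<^sub>v (P *\<^sub>v w) = fAT (P *\<^sub>v w) - P *\<^sub>v fg (P *\<^sub>v w)" using Hdef Pw by auto
  have h3: "H *\<^sub>v p = fAT p - P *\<^sub>v fg p" using Hdef p by auto
  have h4: "P *\<^sub>v (fA w - fg p) = P *\<^sub>v fA w - P *\<^sub>v fg p"
    using P dims w p by (simp add: mult_minus_distrib_mat_vec)
  have h5: "P *\<^sub>v (\<mu> \<cdot>\<^sub>v w + r) = \<mu> \<cdot>\<^sub>v (P *\<^sub>v w) + r'"
    using P w r r' rr by (simp add: mult_add_distrib_mat_vec mult_mat_vec)
  have D: "dim_vec (fA w) = m" "dim_vec (fAT (P *\<^sub>v w)) = m" "dim_vec (fg (P *\<^sub>v w)) = m"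
    "dim_vec (fQ w) = m" "dim_vec (fAT p) = m" "dim_vec (fg p) = m" "dim_vec r' = m" "dim_vec p = m" "dim_vec w = m"
    using dims w p Pw r' by auto
  have HZ: "H *\<^sub>v z = (- \<mu>) \<cdot>\<^sub>v z"
  proof (rule eq_vecI)
    fix i assume i: "i < dim_vec ((- \<mu>) \<cdot>\<^sub>v z)"
    hence im: "i < m" using z by auto
    have a: "(P *\<^sub>v fA w) $ i + (fAT (P *\<^sub>v w)) $ i - (P *\<^sub>v fg (P *\<^sub>v w)) $ i + (fQ w) $ i = 0"
      using arg_cong[OF c1, of "\<lambda>v. v $ i"] im P w D by simp
    have b: "(H *\<^sub>v z) $ i = (fAT (P *\<^sub>v w)) $ i - (P *\<^sub>v fg (P *\<^sub>v w)) $ i - ((fAT p) $ i - (P *\<^sub>v fg p) $ i)"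
      using h1 h2 h3 im P w p D by simp
    have c: "(P *\<^sub>v fA w) $ i - (P *\<^sub>v fg p) $ i = \<mu> * (P *\<^sub>v w) $ i + r' $ i"
      using arg_cong[OF trans[OF h4[symmetric] trans[OF arg_cong[OF e1, of "\<lambda>v. P *\<^sub>v v"] h5]], of "\<lambda>v. v $ i"] im P w p D
      by simp
    have d: "(fQ w) $ i + (fAT p) $ i + \<mu> * p $ i + r' $ i = 0"
      using arg_cong[OF e2, of "\<lambda>v. v $ i"] im D by simp
    have zi: "((- \<mu>) \<cdot>\<^sub>v z) $ i = - \<mu> * ((P *\<^sub>v w) $ i - p $ i)"
      unfolding z_def using im P w p by simp
    show "(H *\<^sub>v z) $ i = ((- \<mu>) \<cdot>\<^sub>v z) $ i"
      unfolding zi b by (rule lin3[OF a c d])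
  qed (use H z in auto)
  have "z = 0\<^sub>v m"
  proof (rule ccontr)
    assume nz: "z \<noteq> 0\<^sub>v m"
    have "eigenvector H z (- \<mu>)" unfolding eigenvector_def using H z nz HZ by auto
    hence "eigenvalue H (- \<mu>)" unfolding eigenvalue_def by blast
    from hur[OF this] mu show False by simp
  qed
  show ?thesis
  proof (rule eq_vecI)
    fix i assume "i < dim_vec p"
    hence im: "i < m" using p by auto
    have "z $ i = 0" using \<open>z = 0\<^sub>v m\<close> im by simp
    thus "(P *\<^sub>v w) $ i = p $ i" unfolding z_def using im P p w by simp
  qed (use P p in auto)
qed



abbreviation cm :: "real mat \<Rightarrow> complex mat" where "cm \<equiv> map_mat complex_of_real"

definition zr :: "nat \<Rightarrow> nat \<Rightarrow> complex" where "zr n m = cis (2 * pi * real m / real n)"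
definition fv :: "nat \<Rightarrow> nat \<Rightarrow> complex vec" where "fv n m = vec n (\<lambda>j. zr n m ^ j)"

lemma zr_pow_n: assumes "n > 0" shows "zr n m ^ n = 1"
proof -
  have "zr n m ^ n = cis (real n * (2 * pi * real m / real n))" unfolding zr_def DeMoivre ..
  also have "real n * (2 * pi * real m / real n) = 2 * pi * real m" using assms by simp
  also have "cis (2 * pi * real m) = 1" by (rule cis_multiple_2pi) simp
  finally show ?thesis .
qed

lemma zr_norm: "cmod (zr n m) = 1" unfolding zr_def by simp

lemma pow_mod_n: fixes z :: complex assumes "z ^ n = 1" shows "z ^ (k mod n) = z ^ k"
proof -
  have "z ^ k = z ^ (n * (k div n) + k mod n)" by simp
  also have "\<dots> = (z ^ n) ^ (k div n) * z ^ (k mod n)" by (simp only: power_add power_mult)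
  finally show ?thesis using assms by simp
qed

lemma cnj_root: fixes z :: complex assumes "z ^ n = 1" "n > 0" "cmod z = 1"
  shows "cnj z = z ^ (n - 1)"
proof -
  have a: "z * cnj z = 1" using assms(3) complex_norm_square[of z] by simp
  have "z * z ^ (n - 1) = z ^ Suc (n - 1)" by simp
  also have "Suc (n - 1) = n" using assms(2) by simp
  finally have b: "z * z ^ (n - 1) = 1" using assms(1) by simp
  have "z \<noteq> 0" using assms(3) by auto
  thus ?thesis using a b by (metis mult_left_cancel)
qed

lemma idx_pred: fixes i j n :: nat assumes "i < n" "j < n"
  shows "(i = (j + 1) mod n) \<longleftrightarrow> (j = (i + n - 1) mod n)"
proof (cases "j + 1 < n")
  case True
  hence jm: "(j + 1) mod n = j + 1" by (rule mod_less)
  show ?thesis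
  proof (cases "i = 0")
    case True
    have "(i + n - 1) mod n = n - 1" using True assms by simp
    thus ?thesis using True \<open>j + 1 < n\<close> jm by auto
  next
    case False
    have "(i + n - 1) = (i - 1) + n" using False by simp
    hence "(i + n - 1) mod n = (i - 1 + n) mod n" by simp
    also have "\<dots> = i - 1" using assms by simp
    finally have "(i + n - 1) mod n = i - 1" .
    thus ?thesis using False jm by auto
  qed
next
  case False
  hence j: "j = n - 1" using assms by simp
  hence jm: "(j + 1) mod n = 0" using assms by simp
  show ?thesis
  proof (cases "i = 0")
    case True
    have "(i + n - 1) mod n = n - 1" using True assms by simp
    thus ?thesis using True j jm by auto
  next
    case False
    have "(i + n - 1) = (i - 1) + n" using False by simp
    hence "(i + n - 1) mod n = (i - 1 + n) mod n" by simp
    also have "\<dots> = i - 1" using assms by simp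
    finally have "(i + n - 1) mod n = i - 1" .
    thus ?thesis using False jm j assms by auto
  qed
qed

lemma mv_idx: assumes "M \<in> carrier_mat nr nc" "v \<in> carrier_vec nc" "i < nr"
  shows "(M *\<^sub>v v) $ i = (\<Sum>j<nc. M $$ (i, j) * v $ j)"
  using assms by (auto simp: scalar_prod_def lessThan_atLeast0 intro!: sum.cong)

lemma D2_carrier[simp]: "D2 n \<in> carrier_mat n n" unfolding D2_def by simp

lemma D2_dims[simp]: "dim_row (D2 n) = n" "dim_col (D2 n) = n" unfolding D2_def by simp_all

lemma D2_sym: "(D2 n)\<^sup>T = D2 n"
  unfolding D2_def by (rule eq_matI) auto

lemma fv_carrier[simp]: "fv n m \<in> carrier_vec n" unfolding fv_def by simp

lemma fv_dim[simp]: "dim_vec (fv n m) = n" unfolding fv_def by simp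

lemma fv_nz: assumes "n > 0" shows "fv n m \<noteq> 0\<^sub>v n"
proof
  assume "fv n m = 0\<^sub>v n"
  hence "fv n m $ 0 = 0" using assms by simp
  thus False using assms unfolding fv_def by simp
qed

definition lam :: "nat \<Rightarrow> nat \<Rightarrow> real" where "lam n m = 2 * Re (zr n m) - 2"

lemma lam_le: "lam n m \<le> 0"
proof -
  have "Re (zr n m) \<le> 1" using abs_Re_le_cmod[of "zr n m"] zr_norm[of n m] by linarith
  thus ?thesis unfolding lam_def by simp
qed

lemma D2_eigen: assumes n: "n > 0"
  shows "cm (D2 n) *\<^sub>v fv n m = complex_of_real (lam n m) \<cdot>\<^sub>v fv n m"
proof (rule eq_vecI)
  let ?z = "zr n m"
  have zn: "?z ^ n = 1" using zr_pow_n[OF n] .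
  fix i assume "i < dim_vec (complex_of_real (lam n m) \<cdot>\<^sub>v fv n m)"
  hence i: "i < n" by (simp add: fv_def)
  have "(cm (D2 n) *\<^sub>v fv n m) $ i = (\<Sum>j<n. complex_of_real ((D2 n) $$ (i, j)) * ?z ^ j)"
    using i by (subst mv_idx[of _ n n], auto simp: fv_def intro!: sum.cong)
  also have "\<dots> = (\<Sum>j<n. ((if i = j then -2 else 0) * ?z ^ j
            + (if j = (i + 1) mod n then ?z ^ j else 0))
            + (if j = (i + n - 1) mod n then ?z ^ j else 0))"
  proof (rule sum.cong)
    fix j assume "j \<in> {..<n}"
    hence j: "j < n" by simp
    have e: "D2 n $$ (i,j) = (if i = j then -2 else 0) + (if j = (i+1) mod n then 1 else 0)
      + (if j = (i+n-1) mod n then 1 else 0)" using i j idx_pred[OF i j] by (simp add: D2_def)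
    show "complex_of_real ((D2 n) $$ (i, j)) * ?z ^ j = ((if i = j then -2 else 0) * ?z ^ j
            + (if j = (i + 1) mod n then ?z ^ j else 0))
            + (if j = (i + n - 1) mod n then ?z ^ j else 0)"
      unfolding e by (simp add: algebra_simps)
  qed simp
  also have "\<dots> = -2 * ?z ^ i + ?z ^ ((i + 1) mod n) + ?z ^ ((i + n - 1) mod n)"
  proof -
    have s1: "(\<Sum>j<n. (if i = j then -2 else 0) * ?z ^ j) = -2 * ?z ^ i"
    proof -
      have "(\<Sum>j<n. (if i = j then -2 else 0) * ?z ^ j) = (\<Sum>j<n. (if i = j then -2 * ?z ^ j else 0))"
        by (rule sum.cong) auto
      thus ?thesis using i by simp
    qed
    have s2: "(\<Sum>j<n. (if j = (i + 1) mod n then ?z ^ j else 0)) = ?z ^ ((i + 1) mod n)"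
      using n by (simp add: sum.delta)
    have s3: "(\<Sum>j<n. (if j = (i + n - 1) mod n then ?z ^ j else 0)) = ?z ^ ((i + n - 1) mod n)"
      using n by (simp add: sum.delta)
    show ?thesis unfolding sum.distrib s1 s2 s3 ..
  qed
  also have "\<dots> = -2 * ?z ^ i + ?z ^ i * ?z + ?z ^ i * ?z ^ (n - 1)"
  proof -
    have "i + n - 1 = i + (n - 1)" using n by simp
    thus ?thesis unfolding pow_mod_n[OF zn] by (simp add: power_add)
  qed
  also have "\<dots> = ?z ^ i * (?z + cnj ?z - 2)"
    unfolding cnj_root[OF zn n zr_norm] by (simp add: algebra_simps)
  also have "?z + cnj ?z - 2 = complex_of_real (lam n m)"
    unfolding complex_add_cnj lam_def by simp
  finally show "(cm (D2 n) *\<^sub>v fv n m) $ i = (complex_of_real (lam n m) \<cdot>\<^sub>v fv n m) $ i"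
    using i fv_carrier[of n m] by (simp add: fv_def)
qed (simp add: fv_def)




lemma fv_idx: "j < n \<Longrightarrow> fv n m $ j = cis (real j * (2 * pi * real m / real n))"
  unfolding fv_def zr_def by (simp add: DeMoivre)

lemma orth: assumes n: "n > 0" and j: "j < n" and l: "l < n"
  shows "(\<Sum>m<n. fv n m $ j * cnj (fv n m $ l)) = (if j = l then of_nat n else 0)"
proof -
  define \<zeta> where "\<zeta> = cis (2 * pi * (real j - real l) / real n)"
  have t: "fv n m $ j * cnj (fv n m $ l) = \<zeta> ^ m" for m
  proof -
    have ang: "real j * (2 * pi * real m / real n) - real l * (2 * pi * real m / real n)
       = real m * (2 * pi * (real j - real l) / real n)" by (simp add: diff_divide_distrib algebra_simps)
    have "fv n m $ j * cnj (fv n m $ l) = cis (real j * (2 * pi * real m / real n) - real l * (2 * pi * real m / real n))"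
      unfolding fv_idx[OF j] fv_idx[OF l] cis_cnj cis_mult by simp
    thus ?thesis unfolding ang \<zeta>_def DeMoivre .
  qed
  show ?thesis
  proof (cases "j = l")
    case True
    hence "\<zeta> = 1" unfolding \<zeta>_def by simp
    thus ?thesis unfolding t using True by simp
  next
    case False
    have zn: "\<zeta> ^ n = 1"
    proof -
      have "\<zeta> ^ n = cis (2 * pi * of_int (int j - int l))"
        unfolding \<zeta>_def DeMoivre using n by simp
      also have "\<dots> = 1" by (rule cis_multiple_2pi) simp
      finally show ?thesis .
    qed
    have z1: "\<zeta> \<noteq> 1"
    proof
      assume "\<zeta> = 1"
      hence "cos (2 * pi * (real j - real l) / real n) = 1" unfolding \<zeta>_def
        by (metis Re_complex_of_real cis.sel(1) one_complex.sel(1))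
      then obtain t :: int where t: "2 * pi * (real j - real l) / real n = real_of_int t * 2 * pi"
        unfolding cos_one_2pi_int by blast
      hence "(real j - real l) * (2 * pi) = (real_of_int t * real n) * (2 * pi)" using n by (simp add: field_simps)
      hence tt: "real j - real l = real_of_int t * real n" using pi_gt_zero by (simp only: mult_right_cancel)
      have "\<bar>real j - real l\<bar> < real n" using j l by linarith
      hence "\<bar>real_of_int t\<bar> * real n < 1 * real n" unfolding tt by (simp add: abs_mult)
      hence "\<bar>real_of_int t\<bar> < 1" using n by (meson mult_less_cancel_right_pos of_nat_0_less_iff)
      hence "t = 0" by linarith
      thus False using tt False by simp
    qed
    have "(\<Sum>m<n. \<zeta> ^ m) = 0" unfolding geometric_sum[OF z1] zn by simp
    thus ?thesis unfolding t using False by simp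
  qed
qed

lemma fourier_span:
  fixes M :: "real mat"
  assumes n: "n > 0" and M: "M \<in> carrier_mat n n"
    and ev: "\<And>m. m < n \<Longrightarrow> cm M *\<^sub>v fv n m = complex_of_real c \<cdot>\<^sub>v fv n m"
    and i: "i < n" and l: "l < n"
  shows "M $$ (i, l) = (if i = l then c else 0)"
proof -
  have "(\<Sum>m<n. (cm M *\<^sub>v fv n m) $ i * cnj (fv n m $ l)) = (\<Sum>m<n. (\<Sum>j<n. complex_of_real (M $$ (i, j)) * fv n m $ j) * cnj (fv n m $ l))"
    using M i by (intro sum.cong refl, subst mv_idx[of _ n n], auto intro!: sum.cong)
  also have "\<dots> = (\<Sum>j<n. complex_of_real (M $$ (i, j)) * (\<Sum>m<n. fv n m $ j * cnj (fv n m $ l)))"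
  proof -
    have "(\<Sum>m<n. (\<Sum>j<n. complex_of_real (M $$ (i, j)) * fv n m $ j) * cnj (fv n m $ l))
      = (\<Sum>m<n. \<Sum>j<n. complex_of_real (M $$ (i, j)) * (fv n m $ j * cnj (fv n m $ l)))"
      by (simp add: sum_distrib_right mult.assoc)
    also have "\<dots> = (\<Sum>j<n. \<Sum>m<n. complex_of_real (M $$ (i, j)) * (fv n m $ j * cnj (fv n m $ l)))"
      by (rule sum.swap)
    also have "\<dots> = (\<Sum>j<n. complex_of_real (M $$ (i, j)) * (\<Sum>m<n. fv n m $ j * cnj (fv n m $ l)))"
      by (simp add: sum_distrib_left)
    finally show ?thesis .
  qed
  also have "\<dots> = (\<Sum>j<n. complex_of_real (M $$ (i, j)) * (if j = l then of_nat n else 0))"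
    using orth[OF n _ l] by (intro sum.cong refl) simp
  also have "\<dots> = complex_of_real (M $$ (i, l)) * of_nat n" using l by (simp add: if_distrib sum.delta' cong: if_cong)
  finally have L: "(\<Sum>m<n. (cm M *\<^sub>v fv n m) $ i * cnj (fv n m $ l)) = complex_of_real (M $$ (i, l)) * of_nat n" .
  have "(\<Sum>m<n. (cm M *\<^sub>v fv n m) $ i * cnj (fv n m $ l)) = (\<Sum>m<n. complex_of_real c * (fv n m $ i * cnj (fv n m $ l)))"
    using ev i by (intro sum.cong refl) simp
  also have "\<dots> = complex_of_real c * (if i = l then of_nat n else 0)"
    unfolding sum_distrib_left[symmetric] orth[OF n i l] ..
  finally have "complex_of_real (M $$ (i, l)) * of_nat n = complex_of_real c * (if i = l then of_nat n else 0)"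
    using L by simp
  hence "complex_of_real (M $$ (i, l)) = complex_of_real (if i = l then c else 0)" using n by (auto split: if_splits)
  thus ?thesis by (simp only: of_real_eq_iff)
qed




lemma sum_split2: fixes a b :: nat shows "(\<Sum>j<a+b. f j) = (\<Sum>j<a. f j) + (\<Sum>j<b. f (a+j))"
  by (induct b) (auto simp: add.commute add.left_commute)

definition blk :: "complex \<Rightarrow> complex \<Rightarrow> complex vec \<Rightarrow> complex vec" where
  "blk a b x = (a \<cdot>\<^sub>v x) @\<^sub>v (b \<cdot>\<^sub>v x)"

lemma blk_carrier[simp]: "x \<in> carrier_vec n \<Longrightarrow> blk a b x \<in> carrier_vec (n+n)"
  unfolding blk_def by auto

lemma blk_idx: "x \<in> carrier_vec n \<Longrightarrow> i < n + n \<Longrightarrow> blk a b x $ i = (if i < n then a * x $ i else b * x $ (i - n))"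
  unfolding blk_def by auto

lemma blk_dim[simp]: "x \<in> carrier_vec n \<Longrightarrow> dim_vec (blk a b x) = n + n"
  unfolding blk_def by auto

lemma blk_add: "x \<in> carrier_vec n \<Longrightarrow> blk a b x + blk c d x = blk (a + c) (b + d) x"
  by (rule eq_vecI) (auto simp: blk_idx algebra_simps)

lemma blk_minus: "x \<in> carrier_vec n \<Longrightarrow> blk a b x - blk c d x = blk (a - c) (b - d) x"
  by (rule eq_vecI) (auto simp: blk_idx algebra_simps)

lemma blk_smult: "x \<in> carrier_vec n \<Longrightarrow> c \<cdot>\<^sub>v blk a b x = blk (c * a) (c * b) x"
  by (rule eq_vecI) (auto simp: blk_idx algebra_simps)

lemma blk_zero: "x \<in> carrier_vec n \<Longrightarrow> blk 0 0 x = 0\<^sub>v (n + n)"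
  by (rule eq_vecI) (auto simp: blk_idx algebra_simps)

lemma mact_smult: assumes R: "R \<in> carrier_mat n n" and x: "x \<in> carrier_vec n"
  and e: "cm R *\<^sub>v x = r \<cdot>\<^sub>v x"
  shows "cm (c \<cdot>\<^sub>m R) *\<^sub>v x = (complex_of_real c * r) \<cdot>\<^sub>v x"
proof (rule eq_vecI)
  fix i assume "i < dim_vec ((complex_of_real c * r) \<cdot>\<^sub>v x)"
  hence i: "i < n" using x by auto
  have "(cm (c \<cdot>\<^sub>m R) *\<^sub>v x) $ i = (\<Sum>j<n. complex_of_real c * (complex_of_real (R $$ (i,j)) * x $ j))"
    using R x i by (subst mv_idx[of _ n n], auto intro!: sum.cong)
  also have "\<dots> = complex_of_real c * (cm R *\<^sub>v x) $ i"
    using R x i by (subst mv_idx[of _ n n], auto simp: sum_distrib_left intro!: sum.cong)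
  finally show "(cm (c \<cdot>\<^sub>m R) *\<^sub>v x) $ i = ((complex_of_real c * r) \<cdot>\<^sub>v x) $ i"
    unfolding e using i x by simp
qed (use x R in auto)

lemma mact_minus: assumes R: "R1 \<in> carrier_mat n n" "R2 \<in> carrier_mat n n" and x: "x \<in> carrier_vec n"
  and e: "cm R1 *\<^sub>v x = r1 \<cdot>\<^sub>v x" "cm R2 *\<^sub>v x = r2 \<cdot>\<^sub>v x"
  shows "cm (R1 - R2) *\<^sub>v x = (r1 - r2) \<cdot>\<^sub>v x"
proof (rule eq_vecI)
  fix i assume "i < dim_vec ((r1 - r2) \<cdot>\<^sub>v x)"
  hence i: "i < n" using x by auto
  have "(cm (R1 - R2) *\<^sub>v x) $ i = (\<Sum>j<n. complex_of_real (R1 $$ (i,j)) * x $ j - complex_of_real (R2 $$ (i,j)) * x $ j)"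
    using R x i by (subst mv_idx[of _ n n], auto intro!: sum.cong simp: algebra_simps)
  also have "\<dots> = (cm R1 *\<^sub>v x) $ i - (cm R2 *\<^sub>v x) $ i"
    using R x i by (subst (1 2) mv_idx[of _ n n], auto simp: sum_subtractf intro!: sum.cong)
  finally show "(cm (R1 - R2) *\<^sub>v x) $ i = ((r1 - r2) \<cdot>\<^sub>v x) $ i"
    unfolding e using i x by (simp add: algebra_simps)
qed (use x R in auto)

lemma mact_one: "x \<in> carrier_vec n \<Longrightarrow> cm (1\<^sub>m n) *\<^sub>v x = 1 \<cdot>\<^sub>v x"
  by (simp add: of_real_hom.mat_hom_one)

lemma mact_zero: "x \<in> carrier_vec n \<Longrightarrow> cm (0\<^sub>m n n) *\<^sub>v x = 0 \<cdot>\<^sub>v x"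
proof -
  assume x: "x \<in> carrier_vec n"
  have "cm (0\<^sub>m n n) = 0\<^sub>m n n" by (rule eq_matI) auto
  thus ?thesis using x by (auto intro!: eq_vecI)
qed

lemma fb_act:
  assumes M: "M1 \<in> carrier_mat n n" "M2 \<in> carrier_mat n n" "M3 \<in> carrier_mat n n" "M4 \<in> carrier_mat n n"
    and x: "x \<in> carrier_vec n"
    and e: "cm M1 *\<^sub>v x = m1 \<cdot>\<^sub>v x" "cm M2 *\<^sub>v x = m2 \<cdot>\<^sub>v x" "cm M3 *\<^sub>v x = m3 \<cdot>\<^sub>v x" "cm M4 *\<^sub>v x = m4 \<cdot>\<^sub>v x"
  shows "cm (four_block_mat M1 M2 M3 M4) *\<^sub>v blk a b x = blk (m1 * a + m2 * b) (m3 * a + m4 * b) x"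
proof -
  have "cm (four_block_mat M1 M2 M3 M4) = four_block_mat (cm M1) (cm M2) (cm M3) (cm M4)"
    by (rule map_four_block_mat[OF M])
  also have "\<dots> *\<^sub>v blk a b x = (cm M1 *\<^sub>v (a \<cdot>\<^sub>v x) + cm M2 *\<^sub>v (b \<cdot>\<^sub>v x)) @\<^sub>v (cm M3 *\<^sub>v (a \<cdot>\<^sub>v x) + cm M4 *\<^sub>v (b \<cdot>\<^sub>v x))"
    unfolding blk_def by (rule four_block_mat_mult_vec) (use M x in auto)
  also have "\<dots> = blk (m1 * a + m2 * b) (m3 * a + m4 * b) x"
    unfolding blk_def using M x e
    by (subst (1 2 3 4) mult_mat_vec[of _ n n]) (auto intro!: eq_vecI simp: algebra_simps)
  finally show ?thesis .
qed

lemma sysB_carrier[simp]: "sys_B n \<in> carrier_mat (n + n) n"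
  unfolding sys_B_def by (metis four_block_carrier_mat add_0_right one_carrier_mat zero_carrier_mat)

lemma sysB_dims[simp]: "dim_row (sys_B n) = n + n" "dim_col (sys_B n) = n"
  using sysB_carrier[of n] by (auto simp del: sysB_carrier)

lemma sysB_idx: "i < n + n \<Longrightarrow> j < n \<Longrightarrow> sys_B n $$ (i, j) = (if i = n + j then 1 else 0)"
  unfolding sys_B_def by auto

lemma Bt_act: assumes x: "x \<in> carrier_vec n"
  shows "cm (sys_B n)\<^sup>T *\<^sub>v blk a b x = b \<cdot>\<^sub>v x"
proof (rule eq_vecI)
  fix i assume "i < dim_vec (b \<cdot>\<^sub>v x)"
  hence i: "i < n" using x by auto
  have c: "cm (sys_B n)\<^sup>T \<in> carrier_mat n (n + n)" by simp
  have "(cm (sys_B n)\<^sup>T *\<^sub>v blk a b x) $ i = (\<Sum>j<n+n. complex_of_real (sys_B n $$ (j, i)) * blk a b x $ j)"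
    using i x by (subst mv_idx[OF c], auto intro!: sum.cong)
  also have "\<dots> = (\<Sum>j<n. complex_of_real (sys_B n $$ (j, i)) * blk a b x $ j) + (\<Sum>j<n. complex_of_real (sys_B n $$ (n + j, i)) * blk a b x $ (n + j))"
    by (rule sum_split2)
  also have "(\<Sum>j<n. complex_of_real (sys_B n $$ (j, i)) * blk a b x $ j) = 0"
    using i by (intro sum.neutral) (auto simp: sysB_idx)
  also have "(\<Sum>j<n. complex_of_real (sys_B n $$ (n + j, i)) * blk a b x $ (n + j)) = (\<Sum>j<n. if j = i then b * x $ i else 0)"
    using i x by (intro sum.cong refl) (auto simp: sysB_idx blk_idx)
  also have "\<dots> = b * x $ i" using i by simp
  finally show "(cm (sys_B n)\<^sup>T *\<^sub>v blk a b x) $ i = (b \<cdot>\<^sub>v x) $ i" using i x by simp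
qed (use x in auto)

lemma B_act: assumes x: "x \<in> carrier_vec n"
  shows "cm (sys_B n) *\<^sub>v (c \<cdot>\<^sub>v x) = blk 0 c x"
proof (rule eq_vecI)
  fix i assume "i < dim_vec (blk 0 c x)"
  hence i: "i < n + n" using x by auto
  have cB: "cm (sys_B n) \<in> carrier_mat (n + n) n" by simp
  have "(cm (sys_B n) *\<^sub>v (c \<cdot>\<^sub>v x)) $ i = (\<Sum>j<n. complex_of_real (sys_B n $$ (i, j)) * (c * x $ j))"
    using i x by (subst mv_idx[OF cB], auto intro!: sum.cong)
  also have "\<dots> = (\<Sum>j<n. if j = i - n \<and> \<not> i < n then c * x $ j else 0)"
    using i x by (intro sum.cong refl) (auto simp: sysB_idx)
  also have "\<dots> = blk 0 c x $ i" using i x by (auto simp: blk_idx)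
  finally show "(cm (sys_B n) *\<^sub>v (c \<cdot>\<^sub>v x)) $ i = blk 0 c x $ i" .
qed (use x in auto)

lemma sysC_carrier[simp]: "sys_C n p \<in> carrier_mat n (n + n)"
  unfolding sys_C_def by (metis four_block_carrier_mat add_0_right smult_carrier_mat one_carrier_mat zero_carrier_mat)

lemma sysC_dims[simp]: "dim_row (sys_C n p) = n" "dim_col (sys_C n p) = n + n"
  using sysC_carrier[of n p] by (auto simp del: sysC_carrier)

lemma sysC_idx: "i < n \<Longrightarrow> j < n + n \<Longrightarrow> sys_C n p $$ (i, j) = (if j = i then p else 0)"
  unfolding sys_C_def by auto

lemma C_act: assumes x: "x \<in> carrier_vec n"
  shows "cm (sys_C n p) *\<^sub>v blk a b x = (complex_of_real p * a) \<cdot>\<^sub>v x"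
proof (rule eq_vecI)
  fix i assume "i < dim_vec ((complex_of_real p * a) \<cdot>\<^sub>v x)"
  hence i: "i < n" using x by auto
  have c: "cm (sys_C n p) \<in> carrier_mat n (n + n)" by simp
  have "(cm (sys_C n p) *\<^sub>v blk a b x) $ i = (\<Sum>j<n+n. complex_of_real (sys_C n p $$ (i, j)) * blk a b x $ j)"
    using i x by (subst mv_idx[OF c], auto intro!: sum.cong)
  also have "\<dots> = (\<Sum>j<n. complex_of_real (sys_C n p $$ (i, j)) * blk a b x $ j) + (\<Sum>j<n. complex_of_real (sys_C n p $$ (i, n + j)) * blk a b x $ (n + j))"
    by (rule sum_split2)
  also have "(\<Sum>j<n. complex_of_real (sys_C n p $$ (i, n + j)) * blk a b x $ (n + j)) = 0"
    using i by (intro sum.neutral) (auto simp: sysC_idx)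
  also have "(\<Sum>j<n. complex_of_real (sys_C n p $$ (i, j)) * blk a b x $ j) = (\<Sum>j<n. if j = i then complex_of_real p * a * x $ i else 0)"
    using i x by (intro sum.cong refl) (auto simp: sysC_idx blk_idx)
  also have "\<dots> = complex_of_real p * a * x $ i" using i by simp
  finally show "(cm (sys_C n p) *\<^sub>v blk a b x) $ i = ((complex_of_real p * a) \<cdot>\<^sub>v x) $ i" using i x by simp
qed (use x in auto)

lemma Ct_act: assumes x: "x \<in> carrier_vec n"
  shows "cm (sys_C n p)\<^sup>T *\<^sub>v (c \<cdot>\<^sub>v x) = blk (complex_of_real p * c) 0 x"
proof (rule eq_vecI)
  fix i assume "i < dim_vec (blk (complex_of_real p * c) 0 x)"
  hence i: "i < n + n" using x by auto
  have cC: "cm (sys_C n p)\<^sup>T \<in> carrier_mat (n + n) n" by simp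
  have "(cm (sys_C n p)\<^sup>T *\<^sub>v (c \<cdot>\<^sub>v x)) $ i = (\<Sum>j<n. complex_of_real (sys_C n p $$ (j, i)) * (c * x $ j))"
    using i x by (subst mv_idx[OF cC], auto intro!: sum.cong)
  also have "\<dots> = (\<Sum>j<n. if j = i \<and> i < n then complex_of_real p * c * x $ j else 0)"
    using i x by (intro sum.cong refl) (auto simp: sysC_idx)
  also have "\<dots> = blk (complex_of_real p * c) 0 x $ i" using i x by (auto simp: blk_idx)
  finally show "(cm (sys_C n p)\<^sup>T *\<^sub>v (c \<cdot>\<^sub>v x)) $ i = blk (complex_of_real p * c) 0 x $ i" .
qed (use x in auto)




lemma cm_mult_vec: assumes "X \<in> carrier_mat nr k" "Y \<in> carrier_mat k nc" "v \<in> carrier_vec nc"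
  shows "cm (X * Y) *\<^sub>v v = cm X *\<^sub>v (cm Y *\<^sub>v v)"
  using assms by (simp add: of_real_hom.mat_hom_mult[of _ nr k _ nc])

lemma cm_add_vec: assumes "X \<in> carrier_mat nr nc" "Y \<in> carrier_mat nr nc" "v \<in> carrier_vec nc"
  shows "cm (X + Y) *\<^sub>v v = cm X *\<^sub>v v + cm Y *\<^sub>v v"
proof -
  have "cm (X + Y) = cm X + cm Y" using assms by (intro eq_matI) auto
  thus ?thesis using assms by (simp add: add_mult_distrib_mat_vec[of _ nr nc])
qed

lemma cm_minus_vec: assumes "X \<in> carrier_mat nr nc" "Y \<in> carrier_mat nr nc" "v \<in> carrier_vec nc"
  shows "cm (X - Y) *\<^sub>v v = cm X *\<^sub>v v - cm Y *\<^sub>v v"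
proof -
  have "cm (X - Y) = cm X - cm Y" using assms by (intro eq_matI) auto
  thus ?thesis using assms by (simp add: minus_mult_distrib_mat_vec[of _ nr nc])
qed

lemma eig_transpose: assumes A: "(A :: complex mat) \<in> carrier_mat m m" and e: "eigenvalue A\<^sup>T z"
  shows "eigenvalue A z"
proof -
  have At: "A\<^sup>T \<in> carrier_mat m m" using A by simp
  have "poly (char_poly A\<^sup>T) z = 0" using e eigenvalue_root_char_poly[OF At] by simp
  hence "poly (char_poly A) z = 0" using A by simp
  thus ?thesis using eigenvalue_root_char_poly[OF A] by simp
qed

lemma root_re_neg: fixes \<mu> :: complex and k \<nu> :: real
  assumes k: "k > 0" and nu: "\<nu> > 0" and r: "\<mu> * \<mu> + of_real k * \<mu> + of_real \<nu> = 0"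
  shows "Re \<mu> < 0"
proof -
  have re: "Re \<mu> * Re \<mu> - Im \<mu> * Im \<mu> + k * Re \<mu> + \<nu> = 0"
    using arg_cong[OF r, of Re] by simp
  have im: "Im \<mu> * (2 * Re \<mu> + k) = 0"
    using arg_cong[OF r, of Im] by (simp add: algebra_simps)
  show ?thesis
  proof (cases "Im \<mu> = 0")
    case True
    show ?thesis
    proof (rule ccontr)
      assume "\<not> Re \<mu> < 0"
      hence a: "k * Re \<mu> \<ge> 0" using k by auto
      have b: "Re \<mu> * Re \<mu> \<ge> 0" by simp
      have "Re \<mu> * Re \<mu> + k * Re \<mu> + \<nu> = 0" using re True by simp
      thus False using a b nu by linarith
    qed
  next
    case False
    hence "2 * Re \<mu> + k = 0" using im by simp
    thus ?thesis using k by simp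
  qed
qed

lemma quad: fixes R k \<nu> :: complex assumes "R * R = k * k - 4 * \<nu>"
  shows "((- k + R) / 2) * ((- k + R) / 2) + k * ((- k + R) / 2) + \<nu> = 0"
proof -
  have "((- k + R) / 2) * ((- k + R) / 2) + k * ((- k + R) / 2) + \<nu> = (R * R - (k * k - 4 * \<nu>)) / 4"
    by (simp add: field_simps)
  thus ?thesis using assms by simp
qed

lemma roots: fixes k \<nu> :: real assumes k: "k > 0" and nu: "\<nu> > 0"
  defines "\<mu> \<equiv> (- of_real k + csqrt ((of_real k)\<^sup>2 - 4 * of_real \<nu>)) / 2"
  shows "\<mu> * \<mu> + of_real k * \<mu> + of_real \<nu> = 0"
    "(- of_real k - \<mu>) * (- of_real k - \<mu>) + of_real k * (- of_real k - \<mu>) + of_real \<nu> = 0"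
    "Re \<mu> < 0" "Re (- of_real k - \<mu>) < 0"
proof -
  let ?r = "csqrt ((of_real k)\<^sup>2 - 4 * of_real \<nu>)"
  have r2: "?r * ?r = (of_real k)\<^sup>2 - 4 * of_real \<nu>" using power2_csqrt[of "(of_real k)\<^sup>2 - 4 * of_real \<nu>"]
    by (simp add: power2_eq_square)
  show r1: "\<mu> * \<mu> + of_real k * \<mu> + of_real \<nu> = 0"
    unfolding \<mu>_def by (rule quad) (metis r2 power2_eq_square)
  show "(- of_real k - \<mu>) * (- of_real k - \<mu>) + of_real k * (- of_real k - \<mu>) + of_real \<nu> = 0"
    using r1 by (simp add: algebra_simps)
  thus "Re (- of_real k - \<mu>) < 0" by (rule root_re_neg[OF k nu])
  show "Re \<mu> < 0" by (rule root_re_neg[OF k nu r1])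
qed

lemma sysA_carrier[simp]: "sys_A n \<in> carrier_mat (n + n) (n + n)"
  unfolding sys_A_def by (rule four_block_carrier_mat) auto

lemma sysA_act: assumes x: "x \<in> carrier_vec n" and ev: "cm (D2 n) *\<^sub>v x = l \<cdot>\<^sub>v x"
  shows "cm (sys_A n) *\<^sub>v blk a b x = blk b (l * a) x"
  unfolding sys_A_def
  using fb_act[of "0\<^sub>m n n" n "1\<^sub>m n" "D2 n" "0\<^sub>m n n" x 0 1 l 0 a b] x ev mact_zero[OF x] mact_one[OF x]
  by simp

lemma sysAt_act: assumes x: "x \<in> carrier_vec n" and ev: "cm (D2 n) *\<^sub>v x = l \<cdot>\<^sub>v x"
  shows "cm (sys_A n)\<^sup>T *\<^sub>v blk a b x = blk (l * b) a x"
proof -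
  have "(sys_A n)\<^sup>T = four_block_mat (0\<^sub>m n n) (D2 n) (1\<^sub>m n) (0\<^sub>m n n)"
    unfolding sys_A_def by (subst transpose_four_block_mat[of _ n n _ n _ n]) (auto simp: D2_sym)
  thus ?thesis
    using fb_act[of "0\<^sub>m n n" n "D2 n" "1\<^sub>m n" "0\<^sub>m n n" x 0 l 1 0 a b] x ev mact_zero[OF x] mact_one[OF x]
    by (simp add: map_mat_transpose[symmetric])
qed

lemma W_act: assumes x: "x \<in> carrier_vec n" and ev: "cm (D2 n) *\<^sub>v x = l \<cdot>\<^sub>v x"
  shows "cm (1\<^sub>m n - t \<cdot>\<^sub>m D2 n) *\<^sub>v x = (1 - of_real t * l) \<cdot>\<^sub>v x"
  by (rule mact_minus[OF _ _ x mact_one[OF x] mact_smult[OF _ x ev]]) auto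

lemma sI_act: assumes x: "x \<in> carrier_vec n"
  shows "cm (t \<cdot>\<^sub>m 1\<^sub>m n) *\<^sub>v x = of_real t \<cdot>\<^sub>v x"
  using mact_smult[OF _ x mact_one[OF x], of t] by simp

lemma Q_act: assumes x: "x \<in> carrier_vec n" and ev: "cm (D2 n) *\<^sub>v x = l \<cdot>\<^sub>v x"
  shows "cm (four_block_mat (1\<^sub>m n - t \<cdot>\<^sub>m D2 n) (0\<^sub>m n n) (0\<^sub>m n n) (q \<cdot>\<^sub>m 1\<^sub>m n)) *\<^sub>v blk a b x
    = blk ((1 - of_real t * l) * a) (of_real q * b) x"
  using fb_act[of "1\<^sub>m n - t \<cdot>\<^sub>m D2 n" n "0\<^sub>m n n" "0\<^sub>m n n" "q \<cdot>\<^sub>m 1\<^sub>m n" x "1 - of_real t * l" 0 0 "of_real q" a b]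
    x W_act[OF x ev] sI_act[OF x] mact_zero[OF x] minus_carrier_mat[of "t \<cdot>\<^sub>m D2 n" n n "1\<^sub>m n"]
  by simp




lemma ext_left: assumes M: "M \<in> carrier_mat n (n + n)" and x: "x \<in> carrier_vec n"
  shows "cm (mat n n (\<lambda>(i,j). M $$ (i, j))) *\<^sub>v x = cm M *\<^sub>v blk 1 0 x"
proof (rule eq_vecI)
  fix i assume "i < dim_vec (cm M *\<^sub>v blk 1 0 x)"
  hence i: "i < n" using M by simp
  have c: "cm M \<in> carrier_mat n (n + n)" using M by simp
  have "(cm M *\<^sub>v blk 1 0 x) $ i = (\<Sum>j<n+n. complex_of_real (M $$ (i, j)) * blk 1 0 x $ j)"
    using i x M by (subst mv_idx[OF c], auto intro!: sum.cong)
  also have "\<dots> = (\<Sum>j<n. complex_of_real (M $$ (i, j)) * blk 1 0 x $ j) + (\<Sum>j<n. complex_of_real (M $$ (i, n + j)) * blk 1 0 x $ (n + j))"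
    by (rule sum_split2)
  also have "(\<Sum>j<n. complex_of_real (M $$ (i, n + j)) * blk 1 0 x $ (n + j)) = 0"
    using x by (intro sum.neutral) (auto simp: blk_idx)
  also have "(\<Sum>j<n. complex_of_real (M $$ (i, j)) * blk 1 0 x $ j) = (cm (mat n n (\<lambda>(i,j). M $$ (i, j))) *\<^sub>v x) $ i"
    using i x by (subst mv_idx[of _ n n], auto simp: blk_idx intro!: sum.cong)
  finally show "(cm (mat n n (\<lambda>(i,j). M $$ (i, j))) *\<^sub>v x) $ i = (cm M *\<^sub>v blk 1 0 x) $ i" by simp
qed (use M in auto)

lemma ext_right: assumes M: "M \<in> carrier_mat n (n + n)" and x: "x \<in> carrier_vec n"
  shows "cm (mat n n (\<lambda>(i,j). M $$ (i, j + n))) *\<^sub>v x = cm M *\<^sub>v blk 0 1 x"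
proof (rule eq_vecI)
  fix i assume "i < dim_vec (cm M *\<^sub>v blk 0 1 x)"
  hence i: "i < n" using M by simp
  have c: "cm M \<in> carrier_mat n (n + n)" using M by simp
  have "(cm M *\<^sub>v blk 0 1 x) $ i = (\<Sum>j<n+n. complex_of_real (M $$ (i, j)) * blk 0 1 x $ j)"
    using i x M by (subst mv_idx[OF c], auto intro!: sum.cong)
  also have "\<dots> = (\<Sum>j<n. complex_of_real (M $$ (i, j)) * blk 0 1 x $ j) + (\<Sum>j<n. complex_of_real (M $$ (i, n + j)) * blk 0 1 x $ (n + j))"
    by (rule sum_split2)
  also have "(\<Sum>j<n. complex_of_real (M $$ (i, j)) * blk 0 1 x $ j) = 0"
    using x by (intro sum.neutral) (auto simp: blk_idx)
  also have "(\<Sum>j<n. complex_of_real (M $$ (i, n + j)) * blk 0 1 x $ (n + j)) = (cm (mat n n (\<lambda>(i,j). M $$ (i, j + n))) *\<^sub>v x) $ i"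
    using i x by (subst mv_idx[of _ n n], auto simp: blk_idx add.commute intro!: sum.cong)
  finally show "(cm (mat n n (\<lambda>(i,j). M $$ (i, j + n))) *\<^sub>v x) $ i = (cm M *\<^sub>v blk 0 1 x) $ i" by simp
qed (use M in auto)

lemma ext_col: assumes M: "M \<in> carrier_mat (n + n) n" and x: "x \<in> carrier_vec n"
  and e: "cm M *\<^sub>v x = blk a b x"
  shows "cm (mat n n (\<lambda>(i,j). M $$ (i, j))) *\<^sub>v x = a \<cdot>\<^sub>v x"
    "cm (mat n n (\<lambda>(i,j). M $$ (i + n, j))) *\<^sub>v x = b \<cdot>\<^sub>v x"
proof -
  have c: "cm M \<in> carrier_mat (n + n) n" using M by simp
  show "cm (mat n n (\<lambda>(i,j). M $$ (i, j))) *\<^sub>v x = a \<cdot>\<^sub>v x"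
  proof (rule eq_vecI)
    fix i assume "i < dim_vec (a \<cdot>\<^sub>v x)"
    hence i: "i < n" using x by simp
    have "(cm (mat n n (\<lambda>(i,j). M $$ (i, j))) *\<^sub>v x) $ i = (cm M *\<^sub>v x) $ i"
      using i x M by (subst mv_idx[of _ n n], simp, simp, simp, subst mv_idx[OF c], auto intro!: sum.cong)
    also have "\<dots> = (a \<cdot>\<^sub>v x) $ i" unfolding e using i x by (simp add: blk_idx)
    finally show "(cm (mat n n (\<lambda>(i,j). M $$ (i, j))) *\<^sub>v x) $ i = (a \<cdot>\<^sub>v x) $ i" .
  qed (use x in auto)
  show "cm (mat n n (\<lambda>(i,j). M $$ (i + n, j))) *\<^sub>v x = b \<cdot>\<^sub>v x"
  proof (rule eq_vecI)
    fix i assume "i < dim_vec (b \<cdot>\<^sub>v x)"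
    hence i: "i < n" using x by simp
    have "(cm (mat n n (\<lambda>(i,j). M $$ (i + n, j))) *\<^sub>v x) $ i = (cm M *\<^sub>v x) $ (i + n)"
      using i x M by (subst mv_idx[of _ n n], simp, simp, simp, subst mv_idx[OF c], auto intro!: sum.cong)
    also have "\<dots> = (b \<cdot>\<^sub>v x) $ i" unfolding e using i x by (simp add: blk_idx)
    finally show "(cm (mat n n (\<lambda>(i,j). M $$ (i + n, j))) *\<^sub>v x) $ i = (b \<cdot>\<^sub>v x) $ i" .
  qed (use x in auto)
qed

lemma diag_from_span: assumes n: "n > 0" and M: "M \<in> carrier_mat n n"
  and ev: "\<And>m. m < n \<Longrightarrow> cm M *\<^sub>v fv n m = complex_of_real c \<cdot>\<^sub>v fv n m"
  shows "diagonal_mat M"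
  unfolding diagonal_mat_def using fourier_span[OF n M ev] M by auto




lemma lin_sol: fixes a b c :: complex shows "a + b + c = 0 \<Longrightarrow> a = - b - c"
  by (simp add: add_eq_0_iff2 add.assoc)

lemma lqr_diag:
  fixes n :: nat and p q :: real and K :: "real mat"
  assumes n: "n > 0" and p: "p > 0" and q: "q > 0"
    and Kopt: "optimal_LQR_gain (2 * n) (sys_A n) (sys_B n)
       (four_block_mat (1\<^sub>m n - (2 / p) \<cdot>\<^sub>m D2 n) (0\<^sub>m n n) (0\<^sub>m n n) (q \<cdot>\<^sub>m 1\<^sub>m n))
       ((p\<^sup>2) \<cdot>\<^sub>m 1\<^sub>m n) K"
  shows "diagonal_mat (mat n n (\<lambda>(i,j). K $$ (i, j))) \<and> diagonal_mat (mat n n (\<lambda>(i,j). K $$ (i, j + n)))"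
proof -
  define A where "A = sys_A n"
  define B where "B = sys_B n"
  define Q where "Q = four_block_mat (1\<^sub>m n - (2 / p) \<cdot>\<^sub>m D2 n) (0\<^sub>m n n) (0\<^sub>m n n) (q \<cdot>\<^sub>m 1\<^sub>m n)"
  define R where "R = (p\<^sup>2) \<cdot>\<^sub>m 1\<^sub>m n"
  have nn: "2 * n = n + n" by simp
  from Kopt obtain P where spdP: "spd (n + n) P"
    and care: "P * A + A\<^sup>T * P - P * B * R * B\<^sup>T * P + Q = 0\<^sub>m (n + n) (n + n)"
    and hur: "hurwitz (A - B * R * B\<^sup>T * P)"
    and Kdef: "K = R * B\<^sup>T * P"
    unfolding optimal_LQR_gain_def A_def B_def Q_def R_def nn by blast
  have P: "P \<in> carrier_mat (n + n) (n + n)" and Psym: "P\<^sup>T = P" using spdP unfolding spd_def by auto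
  have A: "A \<in> carrier_mat (n + n) (n + n)" unfolding A_def by simp
  have B: "B \<in> carrier_mat (n + n) n" unfolding B_def by simp
  have Bt: "B\<^sup>T \<in> carrier_mat n (n + n)" using B by simp
  have R: "R \<in> carrier_mat n n" unfolding R_def by simp
  have Rt: "R\<^sup>T = R" unfolding R_def by (rule eq_matI) auto
  have Q: "Q \<in> carrier_mat (n + n) (n + n)" unfolding Q_def
    by (rule four_block_carrier_mat) (auto intro: minus_carrier_mat)
  define fA where "fA = (\<lambda>v. cm A *\<^sub>v v)"
  define fAT where "fAT = (\<lambda>v. cm A\<^sup>T *\<^sub>v v)"
  define fQ where "fQ = (\<lambda>v. cm Q *\<^sub>v v)"
  define fg where "fg = (\<lambda>v. cm B *\<^sub>v (cm R *\<^sub>v (cm B\<^sup>T *\<^sub>v v)))"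
  define Pc where "Pc = cm P"
  define F where "F = A - B * R * B\<^sup>T * P"
  define H where "H = cm F\<^sup>T"
  have Pc: "Pc \<in> carrier_mat (n + n) (n + n)" unfolding Pc_def using P by simp
  have F: "F \<in> carrier_mat (n + n) (n + n)" unfolding F_def using A B R P by (intro minus_carrier_mat) auto
  have H: "H \<in> carrier_mat (n + n) (n + n)" unfolding H_def using F by simp
  have dims: "\<And>v. v \<in> carrier_vec (n + n) \<Longrightarrow> fA v \<in> carrier_vec (n + n)"
      "\<And>v. v \<in> carrier_vec (n + n) \<Longrightarrow> fAT v \<in> carrier_vec (n + n)"
      "\<And>v. v \<in> carrier_vec (n + n) \<Longrightarrow> fQ v \<in> carrier_vec (n + n)"
      "\<And>v. v \<in> carrier_vec (n + n) \<Longrightarrow> fg v \<in> carrier_vec (n + n)"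
    unfolding fA_def fAT_def fQ_def fg_def using A Q B R by auto
  have care_v: "Pc *\<^sub>v fA v + fAT (Pc *\<^sub>v v) - Pc *\<^sub>v fg (Pc *\<^sub>v v) + fQ v = 0\<^sub>v (n + n)"
    if v: "v \<in> carrier_vec (n + n)" for v
  proof -
    have Z: "cm (P * A + A\<^sup>T * P - P * B * R * B\<^sup>T * P + Q) *\<^sub>v v = 0\<^sub>v (n + n)"
    proof -
      have "cm (0\<^sub>m (n + n) (n + n)) = 0\<^sub>m (n + n) (n + n)" by (rule eq_matI) auto
      moreover have "0\<^sub>m (n + n) (n + n) *\<^sub>v v = (0\<^sub>v (n + n) :: complex vec)"
        using v by (intro eq_vecI) (auto simp: scalar_prod_def)
      ultimately show ?thesis unfolding care by simp
    qed
    have PA: "P * A \<in> carrier_mat (n + n) (n + n)" using P A by simp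
    have AtP: "A\<^sup>T * P \<in> carrier_mat (n + n) (n + n)" using P A by simp
    have PB: "P * B \<in> carrier_mat (n + n) n" using P B by simp
    have PBR: "P * B * R \<in> carrier_mat (n + n) n" using PB R by simp
    have PBRBt: "P * B * R * B\<^sup>T \<in> carrier_mat (n + n) (n + n)" using PBR Bt by simp
    have PBRBtP: "P * B * R * B\<^sup>T * P \<in> carrier_mat (n + n) (n + n)" using PBRBt P by simp
    have S1: "P * A + A\<^sup>T * P \<in> carrier_mat (n + n) (n + n)" using PA AtP by simp
    have S2: "P * A + A\<^sup>T * P - P * B * R * B\<^sup>T * P \<in> carrier_mat (n + n) (n + n)"
      using PBRBtP by (rule minus_carrier_mat)
    have Pv: "cm P *\<^sub>v v \<in> carrier_vec (n + n)" using P v by simp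
    have "cm (P * A + A\<^sup>T * P - P * B * R * B\<^sup>T * P + Q) *\<^sub>v v
      = cm (P * A + A\<^sup>T * P - P * B * R * B\<^sup>T * P) *\<^sub>v v + cm Q *\<^sub>v v" by (rule cm_add_vec[OF S2 Q v])
    also have "cm (P * A + A\<^sup>T * P - P * B * R * B\<^sup>T * P) *\<^sub>v v
      = cm (P * A + A\<^sup>T * P) *\<^sub>v v - cm (P * B * R * B\<^sup>T * P) *\<^sub>v v" by (rule cm_minus_vec[OF S1 PBRBtP v])
    also have "cm (P * A + A\<^sup>T * P) *\<^sub>v v = cm (P * A) *\<^sub>v v + cm (A\<^sup>T * P) *\<^sub>v v"
      by (rule cm_add_vec[OF PA AtP v])
    also have "cm (P * A) *\<^sub>v v = Pc *\<^sub>v fA v" unfolding Pc_def fA_def by (rule cm_mult_vec[OF P A v])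
    also have "cm (A\<^sup>T * P) *\<^sub>v v = fAT (Pc *\<^sub>v v)" unfolding Pc_def fAT_def
      by (rule cm_mult_vec[OF _ P v]) (use A in simp)
    also have "cm (P * B * R * B\<^sup>T * P) *\<^sub>v v = cm (P * B * R * B\<^sup>T) *\<^sub>v (cm P *\<^sub>v v)"
      by (rule cm_mult_vec[OF PBRBt P v])
    also have "\<dots> = cm (P * B * R) *\<^sub>v (cm B\<^sup>T *\<^sub>v (cm P *\<^sub>v v))"
      by (rule cm_mult_vec[OF PBR Bt Pv])
    also have "\<dots> = cm (P * B) *\<^sub>v (cm R *\<^sub>v (cm B\<^sup>T *\<^sub>v (cm P *\<^sub>v v)))"
      by (rule cm_mult_vec[OF PB R]) (use Bt Pv in simp)
    also have "\<dots> = Pc *\<^sub>v fg (Pc *\<^sub>v v)" unfolding Pc_def fg_def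
      by (rule cm_mult_vec[OF P B]) (use Bt Pv R in simp)
    finally have "cm (P * A + A\<^sup>T * P - P * B * R * B\<^sup>T * P + Q) *\<^sub>v v
      = Pc *\<^sub>v fA v + fAT (Pc *\<^sub>v v) - Pc *\<^sub>v fg (Pc *\<^sub>v v) + cm Q *\<^sub>v v" .
    with Z show ?thesis unfolding fQ_def by simp
  qed
  have Ft: "F\<^sup>T = A\<^sup>T - P * (B * (R * B\<^sup>T))"
  proof -
    have "(B * R * B\<^sup>T * P)\<^sup>T = P\<^sup>T * (B * R * B\<^sup>T)\<^sup>T"
      using B R P by (subst transpose_mult[of _ "n+n" "n+n"]) auto
    also have "(B * R * B\<^sup>T)\<^sup>T = B\<^sup>T\<^sup>T * (B * R)\<^sup>T"
      using B R by (subst transpose_mult[of _ "n+n" n]) auto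
    also have "(B * R)\<^sup>T = R\<^sup>T * B\<^sup>T"
      using B R by (subst transpose_mult[of _ "n+n" n]) auto
    finally have "(B * R * B\<^sup>T * P)\<^sup>T = P * (B * (R * B\<^sup>T))" using Psym Rt by simp
    thus ?thesis unfolding F_def using A B R P by (subst transpose_minus[of _ "n+n" "n+n"]) auto
  qed
  have Hdef: "H *\<^sub>v v = fAT v - Pc *\<^sub>v fg v" if v: "v \<in> carrier_vec (n + n)" for v
  proof -
    have "H = cm (F\<^sup>T)" unfolding H_def by (simp add: map_mat_transpose)
    hence "H *\<^sub>v v = cm (A\<^sup>T) *\<^sub>v v - cm (P * (B * (R * B\<^sup>T))) *\<^sub>v v"
      unfolding Ft using A B R P v by (simp add: cm_minus_vec[of _ "n+n" "n+n"])
    also have "cm (P * (B * (R * B\<^sup>T))) *\<^sub>v v = Pc *\<^sub>v fg v"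
    proof -
      have RBt: "R * B\<^sup>T \<in> carrier_mat n (n + n)" using R Bt by simp
      have BRBt: "B * (R * B\<^sup>T) \<in> carrier_mat (n + n) (n + n)" using B RBt by simp
      have "cm (P * (B * (R * B\<^sup>T))) *\<^sub>v v = cm P *\<^sub>v (cm (B * (R * B\<^sup>T)) *\<^sub>v v)"
        by (rule cm_mult_vec[OF P BRBt v])
      also have "cm (B * (R * B\<^sup>T)) *\<^sub>v v = cm B *\<^sub>v (cm (R * B\<^sup>T) *\<^sub>v v)"
        by (rule cm_mult_vec[OF B RBt v])
      also have "cm (R * B\<^sup>T) *\<^sub>v v = cm R *\<^sub>v (cm B\<^sup>T *\<^sub>v v)"
        by (rule cm_mult_vec[OF R Bt v])
      finally show ?thesis unfolding Pc_def fg_def .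
    qed
    finally show ?thesis unfolding fAT_def by (simp add: map_mat_transpose)
  qed
  have hurH: "Re z < 0" if "eigenvalue H z" for z
  proof -
    have "eigenvalue (cm F) z" using eig_transpose[of "cm F" "n + n" z] that F unfolding H_def by (simp add: map_mat_transpose)
    thus ?thesis using hur unfolding hurwitz_def F_def by blast
  qed
  define k where "k = sqrt (2 * p + p\<^sup>2 * q)"
  have kpos: "k > 0" unfolding k_def using p q by (simp add: add_pos_pos)
  have kk: "k * k = 2 * p + p\<^sup>2 * q"
  proof -
    have X: "2 * p + p\<^sup>2 * q > 0" using p q by (simp add: add_pos_pos)
    have "k * k = \<bar>2 * p + p\<^sup>2 * q\<bar>" unfolding k_def by (rule real_sqrt_mult_self)
    thus ?thesis using X by simp
  qed
  have mode: "cm (mat n n (\<lambda>(i,j). K $$ (i, j))) *\<^sub>v fv n mm = complex_of_real p \<cdot>\<^sub>v fv n mm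
     \<and> cm (mat n n (\<lambda>(i,j). K $$ (i, j + n))) *\<^sub>v fv n mm = complex_of_real k \<cdot>\<^sub>v fv n mm"
    if mm: "mm < n" for mm
  proof -
    define x where "x = fv n mm"
    define l where "l = lam n mm"
    have x: "x \<in> carrier_vec n" unfolding x_def by simp
    have ev: "cm (D2 n) *\<^sub>v x = complex_of_real l \<cdot>\<^sub>v x" unfolding x_def l_def by (rule D2_eigen[OF n])
    have l0: "l \<le> 0" unfolding l_def by (rule lam_le)
    define \<nu> where "\<nu> = p - l"
    have nu: "\<nu> > 0" unfolding \<nu>_def using l0 p by simp
    define \<mu> where "\<mu> = (- complex_of_real k + csqrt ((complex_of_real k)\<^sup>2 - 4 * complex_of_real \<nu>)) / 2"
    define \<mu>' where "\<mu>' = - complex_of_real k - \<mu>"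
    note rts = roots[OF kpos nu, folded \<mu>_def, folded \<mu>'_def]
    define pc where "pc = complex_of_real p"
    define kc where "kc = complex_of_real k"
    define lc where "lc = complex_of_real l"
    define qc where "qc = complex_of_real q"
    have pc0: "pc \<noteq> 0" unfolding pc_def using p by simp
    have nuc: "complex_of_real \<nu> = pc - lc" unfolding \<nu>_def pc_def lc_def by simp
    have kkc: "kc * kc = 2 * pc + pc * pc * qc" unfolding kc_def pc_def qc_def
      using arg_cong[OF kk, of complex_of_real] by (simp add: power2_eq_square)
    have mu2: "\<mu> * \<mu> = - kc * \<mu> - pc + lc"
      using lin_sol[OF rts(1)] unfolding nuc kc_def by simp
    have mu'2: "\<mu>' * \<mu>' = - kc * \<mu>' - pc + lc"
      using lin_sol[OF rts(2)] unfolding nuc kc_def \<mu>'_def[symmetric] by simp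
    have musum: "\<mu> + \<mu>' = - kc" unfolding \<mu>'_def kc_def by simp
    have aA: "fA (blk a b x) = blk b (lc * a) x" for a b
      unfolding fA_def A_def lc_def by (rule sysA_act[OF x ev])
    have aAT: "fAT (blk a b x) = blk (lc * b) a x" for a b
      unfolding fAT_def A_def lc_def by (rule sysAt_act[OF x ev])
    have aQ: "fQ (blk a b x) = blk ((1 - 2 / pc * lc) * a) (qc * b) x" for a b
      unfolding fQ_def Q_def lc_def qc_def pc_def using Q_act[OF x ev, of "2 / p" q a b] by simp
    have ag: "fg (blk a b x) = blk 0 (pc * pc * b) x" for a b
    proof -
      have "fg (blk a b x) = cm B *\<^sub>v (cm R *\<^sub>v (b \<cdot>\<^sub>v x))" unfolding fg_def B_def
        by (simp add: Bt_act[OF x])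
      also have "cm R *\<^sub>v (b \<cdot>\<^sub>v x) = (b * (pc * pc)) \<cdot>\<^sub>v x"
        unfolding R_def using x sI_act[OF x, of "p\<^sup>2"] by (simp add: mult_mat_vec[of _ n n] pc_def power2_eq_square mult.commute smult_smult_assoc)
      also have "cm B *\<^sub>v ((b * (pc * pc)) \<cdot>\<^sub>v x) = blk 0 (b * (pc * pc)) x" unfolding B_def by (rule B_act[OF x])
      finally show ?thesis by (simp add: mult.commute)
    qed
    define w1 where "w1 = blk 1 \<mu> x"
    define p1 where "p1 = blk (kc * (pc - lc) / (pc * pc) + \<mu> / pc) (1 / pc + \<mu> * kc / (pc * pc)) x"
    define w2 where "w2 = blk 0 1 x"
    define p2 where "p2 = blk (1 / pc) (kc / (pc * pc)) x"
    have cw: "w1 \<in> carrier_vec (n + n)" "w2 \<in> carrier_vec (n + n)" "p1 \<in> carrier_vec (n + n)" "p2 \<in> carrier_vec (n + n)"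
      unfolding w1_def w2_def p1_def p2_def using x by auto
    have e1: "fA w1 - fg p1 = \<mu> \<cdot>\<^sub>v w1 + 0\<^sub>v (n + n)"
    proof -
      have "fA w1 - fg p1 = blk (\<mu> - 0) (lc * 1 - pc * pc * (1 / pc + \<mu> * kc / (pc * pc))) x"
        unfolding w1_def p1_def aA ag using x by (simp add: blk_minus)
      also have "\<dots> = blk (\<mu> * 1) (\<mu> * \<mu>) x"
      proof -
        have "pc * pc * (1 / pc + \<mu> * kc / (pc * pc)) = pc + \<mu> * kc" using pc0 by (simp add: field_simps)
        thus ?thesis unfolding mu2 by (simp add: algebra_simps)
      qed
      finally show ?thesis unfolding w1_def using x by (simp add: blk_smult)
    qed
    have e2: "fQ w1 + fAT p1 + \<mu> \<cdot>\<^sub>v p1 + 0\<^sub>v (n + n) = 0\<^sub>v (n + n)"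
    proof -
      have "fQ w1 + fAT p1 + \<mu> \<cdot>\<^sub>v p1 = blk ((1 - 2 / pc * lc) * 1 + lc * (1 / pc + \<mu> * kc / (pc * pc)) + \<mu> * (kc * (pc - lc) / (pc * pc) + \<mu> / pc))
         (qc * \<mu> + (kc * (pc - lc) / (pc * pc) + \<mu> / pc) + \<mu> * (1 / pc + \<mu> * kc / (pc * pc))) x"
        unfolding w1_def p1_def aQ aAT using x by (simp add: blk_add blk_smult)
      also have "\<dots> = blk 0 0 x"
      proof -
        have a: "(1 - 2 / pc * lc) * 1 + lc * (1 / pc + \<mu> * kc / (pc * pc)) + \<mu> * (kc * (pc - lc) / (pc * pc) + \<mu> / pc)
          = (pc - lc + \<mu> * kc + \<mu> * \<mu>) / pc" using pc0 by (simp add: field_simps)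
        have b: "qc * \<mu> + (kc * (pc - lc) / (pc * pc) + \<mu> / pc) + \<mu> * (1 / pc + \<mu> * kc / (pc * pc))
          = (\<mu> * (qc * pc * pc + 2 * pc) + kc * (pc - lc + \<mu> * \<mu>)) / (pc * pc)" using pc0 by (simp add: field_simps)
        have c: "\<mu> * (qc * pc * pc + 2 * pc) + kc * (pc - lc + \<mu> * \<mu>) = \<mu> * (qc * pc * pc + 2 * pc - kc * kc)"
          unfolding mu2 by (simp add: algebra_simps)
        show ?thesis unfolding a b c kkc unfolding mu2 by (simp add: algebra_simps)
      qed
      finally show ?thesis using x cw by (simp add: blk_zero)
    qed
    have P1: "Pc *\<^sub>v w1 = p1"
      by (rule core_step[OF Pc H dims care_v Hdef hurH cw(1) cw(3) _ e1 e2])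
        (use Pc in \<open>auto intro!: eq_vecI simp: scalar_prod_def rts(3)\<close>)
    have e3: "fA w2 - fg p2 = \<mu>' \<cdot>\<^sub>v w2 + w1"
    proof -
      have "fA w2 - fg p2 = blk (1 - 0) (lc * 0 - pc * pc * (kc / (pc * pc))) x"
        unfolding w2_def p2_def aA ag using x by (simp add: blk_minus)
      also have "\<dots> = blk (\<mu>' * 0 + 1) (\<mu>' * 1 + \<mu>) x"
      proof -
        have "pc * pc * (kc / (pc * pc)) = kc" using pc0 by (simp add: field_simps)
        thus ?thesis using musum by (simp add: algebra_simps)
      qed
      finally show ?thesis unfolding w1_def w2_def using x by (simp add: blk_smult blk_add)
    qed
    have e4: "fQ w2 + fAT p2 + \<mu>' \<cdot>\<^sub>v p2 + p1 = 0\<^sub>v (n + n)"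
    proof -
      have "fQ w2 + fAT p2 + \<mu>' \<cdot>\<^sub>v p2 + p1 = blk ((1 - 2 / pc * lc) * 0 + lc * (kc / (pc * pc)) + \<mu>' * (1 / pc) + (kc * (pc - lc) / (pc * pc) + \<mu> / pc))
         (qc * 1 + 1 / pc + \<mu>' * (kc / (pc * pc)) + (1 / pc + \<mu> * kc / (pc * pc))) x"
        unfolding w2_def p2_def p1_def aQ aAT using x by (simp add: blk_add blk_smult)
      also have "\<dots> = blk 0 0 x"
      proof -
        have a: "(1 - 2 / pc * lc) * 0 + lc * (kc / (pc * pc)) + \<mu>' * (1 / pc) + (kc * (pc - lc) / (pc * pc) + \<mu> / pc)
          = (kc + (\<mu> + \<mu>')) / pc" using pc0 by (simp add: field_simps)
        have b: "qc * 1 + 1 / pc + \<mu>' * (kc / (pc * pc)) + (1 / pc + \<mu> * kc / (pc * pc))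
          = (qc * pc * pc + 2 * pc + kc * (\<mu> + \<mu>')) / (pc * pc)" using pc0 by (simp add: field_simps)
        show ?thesis unfolding a b musum using kkc by (simp add: algebra_simps)
      qed
      finally show ?thesis using x by (simp add: blk_zero)
    qed
    have P2: "Pc *\<^sub>v w2 = p2"
      by (rule core_step[OF Pc H dims care_v Hdef hurH cw(2) cw(4) cw(1) e3 e4 P1 rts(4)])
    have P10: "Pc *\<^sub>v blk 1 0 x = blk (kc * (pc - lc) / (pc * pc)) (1 / pc) x"
    proof -
      have "blk 1 0 x = w1 - \<mu> \<cdot>\<^sub>v w2" unfolding w1_def w2_def using x by (simp add: blk_smult blk_minus)
      hence "Pc *\<^sub>v blk 1 0 x = Pc *\<^sub>v w1 - \<mu> \<cdot>\<^sub>v (Pc *\<^sub>v w2)"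
        using Pc cw by (simp add: mult_minus_distrib_mat_vec[of _ "n+n" "n+n"] mult_mat_vec[of _ "n+n" "n+n"])
      also have "\<dots> = blk (kc * (pc - lc) / (pc * pc) + \<mu> / pc - \<mu> * (1 / pc)) (1 / pc + \<mu> * kc / (pc * pc) - \<mu> * (kc / (pc * pc))) x"
        unfolding P1 P2 p1_def p2_def using x by (simp add: blk_smult blk_minus)
      finally show ?thesis by simp
    qed
    have Rv: "cm R *\<^sub>v (c \<cdot>\<^sub>v x) = (c * (pc * pc)) \<cdot>\<^sub>v x" for c
      unfolding R_def using x sI_act[OF x, of "p\<^sup>2"] by (simp add: mult_mat_vec[of _ n n] pc_def power2_eq_square smult_smult_assoc)
    have Kc: "K \<in> carrier_mat n (n + n)" unfolding Kdef using R Bt P by simp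
    have Kv: "cm K *\<^sub>v v = cm R *\<^sub>v (cm B\<^sup>T *\<^sub>v (Pc *\<^sub>v v))" if v: "v \<in> carrier_vec (n + n)" for v
    proof -
      have RBt: "R * B\<^sup>T \<in> carrier_mat n (n + n)" using R Bt by simp
      have "cm K *\<^sub>v v = cm (R * B\<^sup>T) *\<^sub>v (cm P *\<^sub>v v)" unfolding Kdef by (rule cm_mult_vec[OF RBt P v])
      also have "\<dots> = cm R *\<^sub>v (cm B\<^sup>T *\<^sub>v (cm P *\<^sub>v v))" by (rule cm_mult_vec[OF R Bt]) (use P v in simp)
      finally show ?thesis unfolding Pc_def .
    qed
    have K1: "cm (mat n n (\<lambda>(i,j). K $$ (i, j))) *\<^sub>v x = pc \<cdot>\<^sub>v x"
    proof -
      have "cm (mat n n (\<lambda>(i,j). K $$ (i, j))) *\<^sub>v x = cm K *\<^sub>v blk 1 0 x" by (rule ext_left[OF Kc x])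
      also have "\<dots> = cm R *\<^sub>v ((1 / pc) \<cdot>\<^sub>v x)" unfolding Kv[OF blk_carrier[OF x]] P10 B_def
        by (simp add: Bt_act[OF x])
      also have "\<dots> = pc \<cdot>\<^sub>v x" unfolding Rv using pc0 by (simp add: field_simps)
      finally show ?thesis .
    qed
    have K2: "cm (mat n n (\<lambda>(i,j). K $$ (i, j + n))) *\<^sub>v x = kc \<cdot>\<^sub>v x"
    proof -
      have "cm (mat n n (\<lambda>(i,j). K $$ (i, j + n))) *\<^sub>v x = cm K *\<^sub>v blk 0 1 x" by (rule ext_right[OF Kc x])
      also have "\<dots> = cm R *\<^sub>v ((kc / (pc * pc)) \<cdot>\<^sub>v x)" unfolding w2_def[symmetric] Kv[OF cw(2)]
        P2 p2_def B_def by (simp add: Bt_act[OF x])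
      also have "\<dots> = kc \<cdot>\<^sub>v x" unfolding Rv using pc0 by (simp add: field_simps)
      finally show ?thesis .
    qed
    show ?thesis using K1 K2 unfolding x_def pc_def kc_def by simp
  qed
  show ?thesis
  proof
    show "diagonal_mat (mat n n (\<lambda>(i,j). K $$ (i, j)))"
      by (rule diag_from_span[OF n, of _ p]) (use mode in auto)
    show "diagonal_mat (mat n n (\<lambda>(i,j). K $$ (i, j + n)))"
      by (rule diag_from_span[OF n, of _ k]) (use mode in auto)
  qed
qed



lemma kal_diag:
  fixes n :: nat and p :: real and L :: "real mat"
  assumes n: "n > 0" and p: "p > 0"
    and Lopt: "optimal_Kalman_gain (2 * n) (sys_A n) (sys_B n) (sys_C n p)
          (1\<^sub>m n - (2 / p) \<cdot>\<^sub>m D2 n) L"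
  shows "diagonal_mat (mat n n (\<lambda>(i,j). L $$ (i, j))) \<and> diagonal_mat (mat n n (\<lambda>(i,j). L $$ (i + n, j)))"
proof -
  define A where "A = sys_A n"
  define B where "B = sys_B n"
  define C where "C = sys_C n p"
  define W where "W = 1\<^sub>m n - (2 / p) \<cdot>\<^sub>m D2 n"
  have nn: "2 * n = n + n" by simp
  from Lopt obtain S where spdS: "spd (n + n) S"
    and care: "A * S + S * A\<^sup>T + B * B\<^sup>T - S * C\<^sup>T * W * C * S = 0\<^sub>m (n + n) (n + n)"
    and hur: "hurwitz (A - S * C\<^sup>T * W * C)"
    and Ldef: "L = S * C\<^sup>T * W"
    unfolding optimal_Kalman_gain_def A_def B_def C_def W_def nn by blast
  have S: "S \<in> carrier_mat (n + n) (n + n)" using spdS unfolding spd_def by auto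
  have A: "A \<in> carrier_mat (n + n) (n + n)" unfolding A_def by simp
  have At: "A\<^sup>T \<in> carrier_mat (n + n) (n + n)" using A by simp
  have B: "B \<in> carrier_mat (n + n) n" unfolding B_def by simp
  have Bt: "B\<^sup>T \<in> carrier_mat n (n + n)" using B by simp
  have C: "C \<in> carrier_mat n (n + n)" unfolding C_def by simp
  have Ct: "C\<^sup>T \<in> carrier_mat (n + n) n" using C by simp
  have W: "W \<in> carrier_mat n n" unfolding W_def by (auto intro: minus_carrier_mat)
  define fA where "fA = (\<lambda>v. cm A\<^sup>T *\<^sub>v v)"
  define fAT where "fAT = (\<lambda>v. cm A *\<^sub>v v)"
  define fQ where "fQ = (\<lambda>v. cm B *\<^sub>v (cm B\<^sup>T *\<^sub>v v))"
  define fg where "fg = (\<lambda>v. cm C\<^sup>T *\<^sub>v (cm W *\<^sub>v (cm C *\<^sub>v v)))"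
  define Sc where "Sc = cm S"
  define F where "F = A - S * C\<^sup>T * W * C"
  define H where "H = cm F"
  have Sc: "Sc \<in> carrier_mat (n + n) (n + n)" unfolding Sc_def using S by simp
  have SCt: "S * C\<^sup>T \<in> carrier_mat (n + n) n" using S Ct by simp
  have SCtW: "S * C\<^sup>T * W \<in> carrier_mat (n + n) n" using SCt W by simp
  have SCtWC: "S * C\<^sup>T * W * C \<in> carrier_mat (n + n) (n + n)" using SCtW C by simp
  have F: "F \<in> carrier_mat (n + n) (n + n)" unfolding F_def using SCtWC by (rule minus_carrier_mat)
  have H: "H \<in> carrier_mat (n + n) (n + n)" unfolding H_def using F by simp
  have dims: "\<And>v. v \<in> carrier_vec (n + n) \<Longrightarrow> fA v \<in> carrier_vec (n + n)"
      "\<And>v. v \<in> carrier_vec (n + n) \<Longrightarrow> fAT v \<in> carrier_vec (n + n)"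
      "\<And>v. v \<in> carrier_vec (n + n) \<Longrightarrow> fQ v \<in> carrier_vec (n + n)"
      "\<And>v. v \<in> carrier_vec (n + n) \<Longrightarrow> fg v \<in> carrier_vec (n + n)"
    unfolding fA_def fAT_def fQ_def fg_def using A B C W by auto
  have fgv: "cm (S * C\<^sup>T * W * C) *\<^sub>v v = Sc *\<^sub>v fg v" if v: "v \<in> carrier_vec (n + n)" for v
  proof -
    have Cv: "cm C *\<^sub>v v \<in> carrier_vec n" using C v by simp
    have "cm (S * C\<^sup>T * W * C) *\<^sub>v v = cm (S * C\<^sup>T * W) *\<^sub>v (cm C *\<^sub>v v)" by (rule cm_mult_vec[OF SCtW C v])
    also have "\<dots> = cm (S * C\<^sup>T) *\<^sub>v (cm W *\<^sub>v (cm C *\<^sub>v v))" by (rule cm_mult_vec[OF SCt W Cv])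
    also have "\<dots> = cm S *\<^sub>v (cm C\<^sup>T *\<^sub>v (cm W *\<^sub>v (cm C *\<^sub>v v)))" by (rule cm_mult_vec[OF S Ct]) (use W Cv in simp)
    finally show ?thesis unfolding Sc_def fg_def .
  qed
  have care_v: "Sc *\<^sub>v fA v + fAT (Sc *\<^sub>v v) - Sc *\<^sub>v fg (Sc *\<^sub>v v) + fQ v = 0\<^sub>v (n + n)"
    if v: "v \<in> carrier_vec (n + n)" for v
  proof -
    have Z: "cm (A * S + S * A\<^sup>T + B * B\<^sup>T - S * C\<^sup>T * W * C * S) *\<^sub>v v = 0\<^sub>v (n + n)"
    proof -
      have "cm (0\<^sub>m (n + n) (n + n)) = 0\<^sub>m (n + n) (n + n)" by (rule eq_matI) auto
      moreover have "0\<^sub>m (n + n) (n + n) *\<^sub>v v = (0\<^sub>v (n + n) :: complex vec)"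
        using v by (intro eq_vecI) (auto simp: scalar_prod_def)
      ultimately show ?thesis unfolding care by simp
    qed
    have AS: "A * S \<in> carrier_mat (n + n) (n + n)" using A S by simp
    have SAt: "S * A\<^sup>T \<in> carrier_mat (n + n) (n + n)" using S At by simp
    have BBt: "B * B\<^sup>T \<in> carrier_mat (n + n) (n + n)" using B Bt by simp
    have SCtWCS: "S * C\<^sup>T * W * C * S \<in> carrier_mat (n + n) (n + n)" using SCtWC S by simp
    have S1: "A * S + S * A\<^sup>T \<in> carrier_mat (n + n) (n + n)" using AS SAt by simp
    have S2: "A * S + S * A\<^sup>T + B * B\<^sup>T \<in> carrier_mat (n + n) (n + n)" using S1 BBt by simp
    have Sv: "cm S *\<^sub>v v \<in> carrier_vec (n + n)" using S v by simp
    have "cm (A * S + S * A\<^sup>T + B * B\<^sup>T - S * C\<^sup>T * W * C * S) *\<^sub>v v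
      = cm (A * S + S * A\<^sup>T + B * B\<^sup>T) *\<^sub>v v - cm (S * C\<^sup>T * W * C * S) *\<^sub>v v" by (rule cm_minus_vec[OF S2 SCtWCS v])
    also have "cm (A * S + S * A\<^sup>T + B * B\<^sup>T) *\<^sub>v v = cm (A * S + S * A\<^sup>T) *\<^sub>v v + cm (B * B\<^sup>T) *\<^sub>v v"
      by (rule cm_add_vec[OF S1 BBt v])
    also have "cm (A * S + S * A\<^sup>T) *\<^sub>v v = cm (A * S) *\<^sub>v v + cm (S * A\<^sup>T) *\<^sub>v v"
      by (rule cm_add_vec[OF AS SAt v])
    also have "cm (A * S) *\<^sub>v v = fAT (Sc *\<^sub>v v)" unfolding Sc_def fAT_def by (rule cm_mult_vec[OF A S v])
    also have "cm (S * A\<^sup>T) *\<^sub>v v = Sc *\<^sub>v fA v" unfolding Sc_def fA_def by (rule cm_mult_vec[OF S At v])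
    also have "cm (B * B\<^sup>T) *\<^sub>v v = fQ v" unfolding fQ_def by (rule cm_mult_vec[OF B Bt v])
    also have "cm (S * C\<^sup>T * W * C * S) *\<^sub>v v = cm (S * C\<^sup>T * W * C) *\<^sub>v (cm S *\<^sub>v v)"
      by (rule cm_mult_vec[OF SCtWC S v])
    also have "\<dots> = Sc *\<^sub>v fg (Sc *\<^sub>v v)" unfolding fgv[OF Sv] Sc_def ..
    finally have E: "fAT (Sc *\<^sub>v v) + Sc *\<^sub>v fA v + fQ v - Sc *\<^sub>v fg (Sc *\<^sub>v v) = 0\<^sub>v (n + n)"
      using Z by simp
    have Scv: "Sc *\<^sub>v v \<in> carrier_vec (n + n)" using Sc v by simp
    have D: "dim_vec (fAT (Sc *\<^sub>v v)) = n + n" "dim_vec (Sc *\<^sub>v fA v) = n + n" "dim_vec (fQ v) = n + n"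
      "dim_vec (Sc *\<^sub>v fg (Sc *\<^sub>v v)) = n + n"
      using dims[OF v] dims[OF Scv] Sc by auto
    show ?thesis
    proof (rule eq_vecI)
      fix i assume "i < dim_vec (0\<^sub>v (n + n) :: complex vec)"
      hence i: "i < n + n" by simp
      have "(fAT (Sc *\<^sub>v v) + Sc *\<^sub>v fA v + fQ v - Sc *\<^sub>v fg (Sc *\<^sub>v v)) $ i = 0"
        using E i by simp
      thus "(Sc *\<^sub>v fA v + fAT (Sc *\<^sub>v v) - Sc *\<^sub>v fg (Sc *\<^sub>v v) + fQ v) $ i = (0\<^sub>v (n + n)) $ i"
        using i D by (simp del: index_mult_mat_vec add: algebra_simps)
    qed (use D in simp)
  qed
  have Hdef: "H *\<^sub>v v = fAT v - Sc *\<^sub>v fg v" if v: "v \<in> carrier_vec (n + n)" for v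
    unfolding H_def F_def fAT_def using cm_minus_vec[OF A SCtWC v] fgv[OF v] by simp
  have hurH: "Re z < 0" if "eigenvalue H z" for z
    using hur that unfolding hurwitz_def H_def F_def by blast
  define k where "k = sqrt (2 * p)"
  have kpos: "k > 0" unfolding k_def using p by simp
  have kk: "k * k = 2 * p" unfolding k_def using p by simp
  have mode: "cm (mat n n (\<lambda>(i,j). L $$ (i, j))) *\<^sub>v fv n mm = complex_of_real (k / p) \<cdot>\<^sub>v fv n mm
     \<and> cm (mat n n (\<lambda>(i,j). L $$ (i + n, j))) *\<^sub>v fv n mm = complex_of_real 1 \<cdot>\<^sub>v fv n mm"
    if mm: "mm < n" for mm
  proof -
    define x where "x = fv n mm"
    define l where "l = lam n mm"
    have x: "x \<in> carrier_vec n" unfolding x_def by simp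
    have ev: "cm (D2 n) *\<^sub>v x = complex_of_real l \<cdot>\<^sub>v x" unfolding x_def l_def by (rule D2_eigen[OF n])
    have l0: "l \<le> 0" unfolding l_def by (rule lam_le)
    define \<nu> where "\<nu> = p - l"
    have nu: "\<nu> > 0" unfolding \<nu>_def using l0 p by simp
    define \<mu> where "\<mu> = (- complex_of_real k + csqrt ((complex_of_real k)\<^sup>2 - 4 * complex_of_real \<nu>)) / 2"
    define \<mu>' where "\<mu>' = - complex_of_real k - \<mu>"
    note rts = roots[OF kpos nu, folded \<mu>_def, folded \<mu>'_def]
    define pc where "pc = complex_of_real p"
    define kc where "kc = complex_of_real k"
    define lc where "lc = complex_of_real l"
    define wc where "wc = 1 - 2 / pc * lc"
    have pc0: "pc \<noteq> 0" unfolding pc_def using p by simp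
    have wc0: "wc \<noteq> 0"
    proof -
      have "wc = complex_of_real (1 - 2 / p * l)" unfolding wc_def pc_def lc_def by simp
      moreover have "1 - 2 / p * l > 0" using p l0 by (simp add: mult_nonneg_nonpos2 add_pos_nonneg)
      ultimately show ?thesis by (metis of_real_eq_0_iff order_less_irrefl)
    qed
    have nuc: "complex_of_real \<nu> = pc - lc" unfolding \<nu>_def pc_def lc_def by simp
    have kkc: "kc * kc = 2 * pc" unfolding kc_def pc_def
      using arg_cong[OF kk, of complex_of_real] by simp
    have mu2: "\<mu> * \<mu> = - kc * \<mu> - pc + lc"
      using lin_sol[OF rts(1)] unfolding nuc kc_def by simp
    have musum: "\<mu> + \<mu>' = - kc" unfolding \<mu>'_def kc_def by simp
    have aA: "fA (blk a b x) = blk (lc * b) a x" for a b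
      unfolding fA_def A_def lc_def by (rule sysAt_act[OF x ev])
    have aAT: "fAT (blk a b x) = blk b (lc * a) x" for a b
      unfolding fAT_def A_def lc_def by (rule sysA_act[OF x ev])
    have aQ: "fQ (blk a b x) = blk 0 b x" for a b
      unfolding fQ_def B_def by (simp add: Bt_act[OF x] B_act[OF x])
    have Wv: "cm W *\<^sub>v (c \<cdot>\<^sub>v x) = (c * wc) \<cdot>\<^sub>v x" for c
    proof -
      have Wc: "cm W \<in> carrier_mat n n" using W by simp
      have "cm W *\<^sub>v x = wc \<cdot>\<^sub>v x" unfolding W_def wc_def pc_def lc_def using W_act[OF x ev, of "2 / p"] by simp
      thus ?thesis unfolding mult_mat_vec[OF Wc x] by (simp add: smult_smult_assoc mult.commute)
    qed
    have ag: "fg (blk a b x) = blk (pc * (pc * a * wc)) 0 x" for a b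
      unfolding fg_def C_def by (simp add: C_act[OF x] W_def[symmetric] Wv Ct_act[OF x] pc_def)
    define s1 where "s1 = kc / (pc * pc * wc)"
    define s2 where "s2 = 1 / (pc * wc)"
    define s3 where "s3 = kc * (pc - lc) / (pc * pc * wc)"
    define w1 where "w1 = blk \<mu> 1 x"
    define p1 where "p1 = blk (s1 * \<mu> + s2) (s2 * \<mu> + s3) x"
    define w2 where "w2 = blk 1 0 x"
    define p2 where "p2 = blk s1 s2 x"
    have cw: "w1 \<in> carrier_vec (n + n)" "w2 \<in> carrier_vec (n + n)" "p1 \<in> carrier_vec (n + n)" "p2 \<in> carrier_vec (n + n)"
      unfolding w1_def w2_def p1_def p2_def using x by auto
    have q1: "pc * (pc * s1 * wc) = kc" unfolding s1_def using pc0 wc0 by (simp add: field_simps)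
    have q2: "pc * (pc * s2 * wc) = pc" unfolding s2_def using pc0 wc0 by (simp add: field_simps)
    have e1: "fA w1 - fg p1 = \<mu> \<cdot>\<^sub>v w1 + 0\<^sub>v (n + n)"
    proof -
      have "fA w1 - fg p1 = blk (lc * 1 - pc * (pc * (s1 * \<mu> + s2) * wc)) (\<mu> - 0) x"
        unfolding w1_def p1_def aA ag using x by (simp add: blk_minus)
      also have "\<dots> = blk (\<mu> * \<mu>) (\<mu> * 1) x"
      proof -
        have "pc * (pc * (s1 * \<mu> + s2) * wc) = \<mu> * (pc * (pc * s1 * wc)) + pc * (pc * s2 * wc)"
          by (simp add: algebra_simps)
        thus ?thesis unfolding q1 q2 mu2 by (simp add: algebra_simps)
      qed
      finally show ?thesis unfolding w1_def using x by (simp add: blk_smult)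
    qed
    have e2: "fQ w1 + fAT p1 + \<mu> \<cdot>\<^sub>v p1 + 0\<^sub>v (n + n) = 0\<^sub>v (n + n)"
    proof -
      have "fQ w1 + fAT p1 + \<mu> \<cdot>\<^sub>v p1 = blk (0 + (s2 * \<mu> + s3) + \<mu> * (s1 * \<mu> + s2))
         (1 + lc * (s1 * \<mu> + s2) + \<mu> * (s2 * \<mu> + s3)) x"
        unfolding w1_def p1_def aQ aAT using x by (simp add: blk_add blk_smult)
      also have "\<dots> = blk 0 0 x"
      proof -
        have a: "0 + (s2 * \<mu> + s3) + \<mu> * (s1 * \<mu> + s2) = (2 * pc * \<mu> + kc * (pc - lc + \<mu> * \<mu>)) / (pc * pc * wc)"
          unfolding s1_def s2_def s3_def using pc0 wc0 by (simp add: field_simps)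
        have a2: "2 * pc * \<mu> + kc * (pc - lc + \<mu> * \<mu>) = \<mu> * (2 * pc - kc * kc)"
          unfolding mu2 by (simp add: algebra_simps)
        have b: "1 + lc * (s1 * \<mu> + s2) + \<mu> * (s2 * \<mu> + s3) = (pc * pc * wc + lc * pc + pc * (\<mu> * \<mu>) + kc * pc * \<mu>) / (pc * pc * wc)"
          unfolding s1_def s2_def s3_def using pc0 wc0 by (simp add: field_simps)
        have b2: "pc * pc * wc + lc * pc + pc * (\<mu> * \<mu>) + kc * pc * \<mu> = 0"
          unfolding mu2 wc_def using pc0 by (simp add: field_simps)
        show ?thesis unfolding a a2 b b2 kkc by simp
      qed
      finally show ?thesis using x by (simp add: blk_zero)
    qed
    have P1: "Sc *\<^sub>v w1 = p1"
      by (rule core_step[OF Sc H dims care_v Hdef hurH cw(1) cw(3) _ e1 e2])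
        (use Sc in \<open>auto intro!: eq_vecI simp: scalar_prod_def rts(3)\<close>)
    have e3: "fA w2 - fg p2 = \<mu>' \<cdot>\<^sub>v w2 + w1"
    proof -
      have "fA w2 - fg p2 = blk (lc * 0 - pc * (pc * s1 * wc)) (1 - 0) x"
        unfolding w2_def p2_def aA ag using x by (simp add: blk_minus)
      also have "\<dots> = blk (\<mu>' * 1 + \<mu>) (\<mu>' * 0 + 1) x"
        unfolding q1 using musum by (simp add: algebra_simps)
      finally show ?thesis unfolding w1_def w2_def using x by (simp add: blk_smult blk_add)
    qed
    have e4: "fQ w2 + fAT p2 + \<mu>' \<cdot>\<^sub>v p2 + p1 = 0\<^sub>v (n + n)"
    proof -
      have "fQ w2 + fAT p2 + \<mu>' \<cdot>\<^sub>v p2 + p1 = blk (0 + s2 + \<mu>' * s1 + (s1 * \<mu> + s2))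
         (0 + lc * s1 + \<mu>' * s2 + (s2 * \<mu> + s3)) x"
        unfolding w2_def p2_def p1_def aQ aAT using x by (simp add: blk_add blk_smult)
      also have "\<dots> = blk 0 0 x"
      proof -
        have a: "0 + s2 + \<mu>' * s1 + (s1 * \<mu> + s2) = (2 * pc + kc * (\<mu> + \<mu>')) / (pc * pc * wc)"
          unfolding s1_def s2_def using pc0 wc0 by (simp add: field_simps)
        have b: "0 + lc * s1 + \<mu>' * s2 + (s2 * \<mu> + s3) = (lc * kc + pc * (\<mu> + \<mu>') + kc * (pc - lc)) / (pc * pc * wc)"
          unfolding s1_def s2_def s3_def using pc0 wc0 by (simp add: field_simps)
        show ?thesis unfolding a b musum using kkc by (simp add: algebra_simps)
      qed
      finally show ?thesis using x by (simp add: blk_zero)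
    qed
    have P2: "Sc *\<^sub>v w2 = p2"
      by (rule core_step[OF Sc H dims care_v Hdef hurH cw(2) cw(4) cw(1) e3 e4 P1 rts(4)])
    have Lc: "L \<in> carrier_mat (n + n) n" unfolding Ldef using SCtW .
    have Lx: "cm L *\<^sub>v x = blk (kc / pc) 1 x"
    proof -
      have Wx: "cm W *\<^sub>v x = wc \<cdot>\<^sub>v x" using Wv[of 1] by simp
      have "cm L *\<^sub>v x = cm (S * C\<^sup>T) *\<^sub>v (cm W *\<^sub>v x)" unfolding Ldef by (rule cm_mult_vec[OF SCt W x])
      also have "\<dots> = cm S *\<^sub>v (cm C\<^sup>T *\<^sub>v (cm W *\<^sub>v x))" by (rule cm_mult_vec[OF S Ct]) (use W x in simp)
      also have "cm C\<^sup>T *\<^sub>v (cm W *\<^sub>v x) = (pc * wc) \<cdot>\<^sub>v w2"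
        unfolding Wx C_def w2_def using x by (simp add: Ct_act[OF x] blk_smult pc_def)
      also have "cm S *\<^sub>v ((pc * wc) \<cdot>\<^sub>v w2) = (pc * wc) \<cdot>\<^sub>v p2"
        using S cw P2 unfolding Sc_def by (simp add: mult_mat_vec[of _ "n+n" "n+n"])
      also have "\<dots> = blk (pc * wc * s1) (pc * wc * s2) x" unfolding p2_def using x by (simp add: blk_smult)
      also have "pc * wc * s1 = kc / pc" unfolding s1_def using pc0 wc0 by (simp add: field_simps)
      also have "pc * wc * s2 = 1" unfolding s2_def using pc0 wc0 by (simp add: field_simps)
      finally show ?thesis .
    qed
    have "kc / pc = complex_of_real (k / p)" unfolding kc_def pc_def by simp
    thus ?thesis using ext_col[OF Lc x Lx] unfolding x_def by simp
  qed
  show ?thesis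
  proof
    show "diagonal_mat (mat n n (\<lambda>(i,j). L $$ (i, j)))"
      by (rule diag_from_span[OF n, of _ "k / p"]) (use mode in auto)
    show "diagonal_mat (mat n n (\<lambda>(i,j). L $$ (i + n, j)))"
      by (rule diag_from_span[OF n, of _ 1]) (use mode in auto)
  qed
qed


theorem mainTheorem4:
  fixes n :: nat and c \<Delta>x \<alpha> q1 q2 r \<sigma>m \<sigma>d :: real
    and K L :: "real mat"
  assumes n2: "n \<ge> 2"
    and pos: "c > 0" "\<Delta>x > 0" "\<alpha> > 0" "q1 > 0" "q2 > 0" "r > 0" "\<sigma>m > 0" "\<sigma>d > 0"
    and K_opt: "optimal_LQR_gain (2 * n) (sys_A n) (sys_B n)
          (four_block_mat (1\<^sub>m n - (\<alpha>\<^sup>2 / \<Delta>x\<^sup>2) \<cdot>\<^sub>m D2 n) (0\<^sub>m n n)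
                          (0\<^sub>m n n) ((c\<^sup>2 * q1\<^sup>2 / (q2\<^sup>2 * \<Delta>x\<^sup>2)) \<cdot>\<^sub>m 1\<^sub>m n))
          (((\<Delta>x\<^sup>2 * r / (c\<^sup>2 * q1))\<^sup>2) \<cdot>\<^sub>m 1\<^sub>m n) K"
    and L_opt: "optimal_Kalman_gain (2 * n) (sys_A n) (sys_B n)
          (sys_C n (\<Delta>x\<^sup>2 * \<sigma>d / (c\<^sup>2 * \<sigma>m)))
          (1\<^sub>m n - (\<alpha>\<^sup>2 / \<Delta>x\<^sup>2) \<cdot>\<^sub>m D2 n) L"
    and h1: "q1 = \<sigma>m"
    and h2: "r = \<sigma>d"
    and h3: "\<alpha>\<^sup>2 / \<Delta>x\<^sup>2 = 2 / (\<Delta>x\<^sup>2 * \<sigma>d / (c\<^sup>2 * \<sigma>m))"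
  shows "diagonal_mat (mat n n (\<lambda>(i,j). K $$ (i, j)))
       \<and> diagonal_mat (mat n n (\<lambda>(i,j). K $$ (i, j + n)))
       \<and> diagonal_mat (mat n n (\<lambda>(i,j). L $$ (i, j)))
       \<and> diagonal_mat (mat n n (\<lambda>(i,j). L $$ (i + n, j)))"
proof -
  have n: "n > 0" using n2 by simp
  define p where "p = \<Delta>x\<^sup>2 * \<sigma>d / (c\<^sup>2 * \<sigma>m)"
  have pp: "p > 0" unfolding p_def using pos by simp
  have qq: "c\<^sup>2 * q1\<^sup>2 / (q2\<^sup>2 * \<Delta>x\<^sup>2) > 0" using pos by simp
  have e1: "\<Delta>x\<^sup>2 * r / (c\<^sup>2 * q1) = p" unfolding p_def using h1 h2 by simp
  have e3: "\<alpha>\<^sup>2 / \<Delta>x\<^sup>2 = 2 / p" unfolding p_def using h3 .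
  have K: "diagonal_mat (mat n n (\<lambda>(i,j). K $$ (i, j))) \<and> diagonal_mat (mat n n (\<lambda>(i,j). K $$ (i, j + n)))"
    by (rule lqr_diag[OF n pp qq]) (use K_opt in \<open>simp only: e1 e3\<close>)
  have L: "diagonal_mat (mat n n (\<lambda>(i,j). L $$ (i, j))) \<and> diagonal_mat (mat n n (\<lambda>(i,j). L $$ (i + n, j)))"
    by (rule kal_diag[OF n pp]) (use L_opt in \<open>simp only: e3 p_def\<close>)
  show ?thesis using K L by blast
qed

end
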